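(* Let $\sigma_n,\sigma\in\Sigma$ with $d_S(\sigma_n,\sigma)\to0$. Then $d_\Sigma(\sigma_n,\sigma)\to0$ if and only if for every $b\in\mathbb R^d$ $$\lim_{h\to-\infty}\sup_n|h|^{-(d+1)/d}|y^{b,h}(\sigma_n)|_\infty=0,$$ and this condition (for every $b$) is equivalent to: for every $b\in\mathbb R^d$, $$\lim_{M\to\infty}\sup_n\sup_{y\le b,\ |y|_\infty\ge M}\frac{\sigma_n(y)}{|y|_\infty^{d/(d+1)}}=-\infty.$$
   Context: Fix $d\ge2$. Order on $\mathbb R^d$: $x\le y$ iff $x_i\le y_i$ for all $i$; $|x|_\infty=\max_i|x_i|$; $[a,b]=\{x:a\le x\le b\}$. $\mathbb Z^*=\mathbb Z\cup\{\pm\infty\}$ with the discrete metric $r(x,y)=\mathbf 1\{x\ne y\}$. $D(\mathbb R^d,\mathbb Z^* )$ is the set of functions $\sigma:\mathbb R^d\to\mathbb Z^*$ such that for every bounded rectangle $[a,b)$ there are finite partitions $a_i=s_i^0<\dots<s_i^{m_i}=b_i$ of each coordinate axis with $\sigma$ constant on each rectangle $\prod_i[s_i^{k_i},s_i^{k_i+1})$. For $u>0$, $[x]_u=((x_1\wedge u)\vee(-u),\dots,(x_d\wedge u)\vee(-u))$. $\Lambda$ is the set of maps $\lambda(x)=(\lambda_1(x_1),\dots,\lambda_d(x_d))$, each $\lambda_i$ bijective strictly increasing Lipschitz on $\mathbb R$, with $\gamma(\lambda)=\sum_i\sup_{s\ne t}|\log\frac{\lambda_i(t)-\lambda_i(s)}{t-s}|+\int_0^\infty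 e^{-u}(1\wedge\sup_x|[\lambda(x)]_u-[x]_u|_\infty)du<\infty$. $d_S(\rho,\sigma)=\inf_{\lambda\in\Lambda}\{\gamma(\lambda)\vee\int_0^\infty e^{-u}\sup_x r(\rho([x]_u),\sigma([\lambda(x)]_u))du\}$. $\Sigma$ is the set of $\sigma\in D(\mathbb R^d,\mathbb Z^* )$ that are nondecreasing ($x\le y\Rightarrow\sigma(x)\le\sigma(y)$) and satisfy, for every $b\in\mathbb R^d$, $\lim_{M\to\infty}\sup\{|y|_\infty^{-d/(d+1)}\sigma(y):y\le b,|y|_\infty\ge M\}=-\infty$. For $\sigma\in\Sigma$, $h\in\mathbb Z$, $b\in\mathbb R^d$, $y^{b,h}(\sigma)$ is the maximal $y\le b$ such that $[y,b]$ contains $\{x\le b:\sigma(x)\ge h\}$ ($=b$ if empty). $\theta_b(\rho,\sigma)=\sup_{h\le-1}|h|^{-(d+1)/d}|y^{b,h}(\rho)-y^{b,h}(\sigma)|_\infty$, $\Theta(\rho,\sigma)=\int_{\mathbb R^d}e^{-|b|_\infty}(1\wedge\theta_b(\rho,\sigma))db$, and $d_\Sigma(\rho,\sigma)=\Theta(\rho,\sigma)+d_S(\rho,\sigma)$. *)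

theory Defs
  imports "HOL-Analysis.Analysis" "HOL-Library.Extended"
begin

text \<open>Points of R^d are vectors of type real^'n (d = CARD('n)); the order is the
 componentwise order of the library; |x|_inf is infnorm.  Z* is int extended
 (Fin k, Pinf, Minf) with its library order.\<close>

definition zs_ereal :: "int extended \<Rightarrow> ereal" where
  "zs_ereal z = (case z of Fin k \<Rightarrow> ereal (real_of_int k) | Pinf \<Rightarrow> PInfty | Minf \<Rightarrow> MInfty)"

definition clamp :: "real \<Rightarrow> real^'n \<Rightarrow> real^'n" where
  "clamp u x = (\<chi> i. max (min (x$i) u) (-u))"

text \<open>D(R^d, Z*): on every bounded rectangle [a,b) there are finite coordinate
 partitions a_i = s_i^0 < ... < s_i^m = b_i such that sigma is constant on every cell
 prod_i [s_i^k, s_i^(k+1)).  The partition of axis i is the finite set S i of its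
 points; two points of [a,b) lie in the same cell iff for no i a partition point of
 axis i separates their i-th coordinates.\<close>
definition same_cell :: "('n \<Rightarrow> real set) \<Rightarrow> real^'n \<Rightarrow> real^'n \<Rightarrow> bool" where
  "same_cell S x y \<longleftrightarrow> (\<forall>i. \<forall>s\<in>S i. \<not> (x$i < s \<and> s \<le> y$i) \<and> \<not> (y$i < s \<and> s \<le> x$i))"

definition in_D :: "(real^'n::finite \<Rightarrow> int extended) \<Rightarrow> bool" where
  "in_D \<sigma> \<longleftrightarrow> (\<forall>a b::real^'n. (\<forall>i. a$i < b$i) \<longrightarrow>
      (\<exists>S :: 'n \<Rightarrow> real set. (\<forall>i. finite (S i) \<and> a$i \<in> S i \<and> b$i \<in> S i \<and> S i \<subseteq> {a$i..b$i}) \<and>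
         (\<forall>x y. (\<forall>i. a$i \<le> x$i \<and> x$i < b$i) \<longrightarrow> (\<forall>i. a$i \<le> y$i \<and> y$i < b$i) \<longrightarrow>
                same_cell S x y \<longrightarrow> \<sigma> x = \<sigma> y)))"

definition apply_tc :: "('n \<Rightarrow> real \<Rightarrow> real) \<Rightarrow> real^'n \<Rightarrow> real^'n" where
  "apply_tc lam x = (\<chi> i. lam i (x$i))"

definition gamma :: "('n::finite \<Rightarrow> real \<Rightarrow> real) \<Rightarrow> ennreal" where
  "gamma lam =
     (\<Sum>i\<in>UNIV. (SUP st\<in>{(s,t). s \<noteq> t}. ennreal \<bar>ln ((lam i (snd st) - lam i (fst st)) / (snd st - fst st))\<bar>))
     + (\<integral>\<^sup>+ u\<in>{0..}. ennreal (exp (-u)) *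
           min 1 (SUP x::real^'n. ennreal (infnorm (clamp u (apply_tc lam x) - clamp u x))) \<partial>lborel)"

definition Lambda :: "('n::finite \<Rightarrow> real \<Rightarrow> real) set" where
  "Lambda = {lam. (\<forall>i. bij (lam i) \<and> strict_mono (lam i) \<and> (\<exists>C. C-lipschitz_on UNIV (lam i)))
                 \<and> gamma lam < \<infinity>}"

definition dS :: "(real^'n::finite \<Rightarrow> int extended) \<Rightarrow> (real^'n \<Rightarrow> int extended) \<Rightarrow> ennreal" where
  "dS \<rho> \<sigma> = (INF lam\<in>Lambda. max (gamma lam)
      (\<integral>\<^sup>+ u\<in>{0..}. ennreal (exp (-u)) *
          (SUP x::real^'n. (if \<rho> (clamp u x) \<noteq> \<sigma> (clamp u (apply_tc lam x)) then 1 else 0)) \<partial>lborel))"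

definition Sigma_set :: "(real^'n::finite \<Rightarrow> int extended) set" where
  "Sigma_set = {\<sigma>. in_D \<sigma> \<and> (\<forall>x y. x \<le> y \<longrightarrow> \<sigma> x \<le> \<sigma> y) \<and>
     (\<forall>b::real^'n.
        ((\<lambda>M::real. SUP y\<in>{y. y \<le> b \<and> infnorm y \<ge> M}.
             ereal (infnorm y powr (- real CARD('n) / (real CARD('n) + 1))) * zs_ereal (\<sigma> y))
          \<longlongrightarrow> MInfty) at_top)}"

definition ybh :: "real^'n::finite \<Rightarrow> int \<Rightarrow> (real^'n \<Rightarrow> int extended) \<Rightarrow> real^'n" where
  "ybh b h \<sigma> = (if {x. x \<le> b \<and> \<sigma> x \<ge> Fin h} = {} then b
     else (GREATEST y. y \<le> b \<and> {x. x \<le> b \<and> \<sigma> x \<ge> Fin h} \<subseteq> {y..b}))"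

definition theta :: "real^'n::finite \<Rightarrow> (real^'n \<Rightarrow> int extended) \<Rightarrow> (real^'n \<Rightarrow> int extended) \<Rightarrow> ennreal" where
  "theta b \<rho> \<sigma> = (SUP h\<in>{h::int. h \<le> -1}.
      ennreal (\<bar>real_of_int h\<bar> powr (- (real CARD('n) + 1) / real CARD('n)) * infnorm (ybh b h \<rho> - ybh b h \<sigma>)))"

definition Theta :: "(real^'n::finite \<Rightarrow> int extended) \<Rightarrow> (real^'n \<Rightarrow> int extended) \<Rightarrow> ennreal" where
  "Theta \<rho> \<sigma> = (\<integral>\<^sup>+ b. ennreal (exp (- infnorm b)) * min 1 (theta b \<rho> \<sigma>) \<partial>lborel)"

definition dSigma :: "(real^'n::finite \<Rightarrow> int extended) \<Rightarrow> (real^'n \<Rightarrow> int extended) \<Rightarrow> ennreal" where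
  "dSigma \<rho> \<sigma> = Theta \<rho> \<sigma> + dS \<rho> \<sigma>"

end

theory Submission
  imports Defs
begin

lemma infnorm_le_cart: fixes x :: "real^'n" shows "infnorm x \<le> r \<longleftrightarrow> (\<forall>i. \<bar>x$i\<bar> \<le> r)"
proof
  assume "infnorm x \<le> r" then show "\<forall>i. \<bar>x$i\<bar> \<le> r" using component_le_infnorm_cart order_trans by blast
next
  assume a: "\<forall>i. \<bar>x$i\<bar> \<le> r"
  show "infnorm x \<le> r" unfolding infnorm_cart
    by (rule cSup_least) (use a in auto)
qed

lemma infnorm_le_cartI: fixes x :: "real^'n" shows "(\<And>i. \<bar>x$i\<bar> \<le> r) \<Longrightarrow> infnorm x \<le> r"
  using infnorm_le_cart by blast

definition Eset :: "(real^'n::finite \<Rightarrow> int extended) \<Rightarrow> real^'n \<Rightarrow> int \<Rightarrow> (real^'n) set" where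
  "Eset \<sigma> b h = {x. x \<le> b \<and> \<sigma> x \<ge> Fin h}"

lemma ybh_inf:
  fixes \<sigma> :: "real^'n::finite \<Rightarrow> int extended"
  assumes ne: "Eset \<sigma> b h \<noteq> {}" and bd: "\<forall>x\<in>Eset \<sigma> b h. m \<le> x"
  shows "ybh b h \<sigma> = (\<chi> i. Inf ((\<lambda>x. x$i) ` Eset \<sigma> b h))"
proof -
  let ?E = "Eset \<sigma> b h"
  let ?y = "(\<chi> i. Inf ((\<lambda>x. x$i) ` ?E)) :: real^'n"
  have bdd: "bdd_below ((\<lambda>x. x$i) ` ?E)" for i
    using bd unfolding bdd_below_def less_eq_vec_def by auto
  have low: "?y \<le> x" if "x \<in> ?E" for x
    unfolding less_eq_vec_def using that bdd by (auto intro: cInf_lower)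
  have yb: "?y \<le> b"
  proof -
    obtain x where "x \<in> ?E" using ne by auto
    then show ?thesis using low[of x] unfolding Eset_def by auto
  qed
  have grt: "y \<le> ?y" if "y \<le> b \<and> ?E \<subseteq> {y..b}" for y
    unfolding less_eq_vec_def using that ne by (auto intro!: cInf_greatest simp: less_eq_vec_def)
  have "(GREATEST y. y \<le> b \<and> ?E \<subseteq> {y..b}) = ?y"
    by (rule Greatest_equality) (use yb low grt in \<open>auto simp: Eset_def\<close>)
  then show ?thesis using ne unfolding ybh_def Eset_def by auto
qed

lemma ybh_empty: "Eset \<sigma> b h = {} \<Longrightarrow> ybh b h \<sigma> = b"
  by (simp add: ybh_def Eset_def)

lemma ybh_comp:
  fixes \<sigma> :: "real^'n::finite \<Rightarrow> int extended"
  assumes ne: "Eset \<sigma> b h \<noteq> {}" and bd: "\<forall>x\<in>Eset \<sigma> b h. m \<le> x"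
  shows "ybh b h \<sigma> $ i = Inf ((\<lambda>x. x$i) ` Eset \<sigma> b h)"
  using ybh_inf[OF assms] by simp

lemma ybh_le_mem:
  fixes \<sigma> :: "real^'n::finite \<Rightarrow> int extended"
  assumes bd: "\<forall>x\<in>Eset \<sigma> b h. m \<le> x" and x: "x \<in> Eset \<sigma> b h"
  shows "ybh b h \<sigma> \<le> x"
proof -
  have ne: "Eset \<sigma> b h \<noteq> {}" using x by auto
  have bdd: "bdd_below ((\<lambda>x. x$i) ` Eset \<sigma> b h)" for i
    using bd unfolding bdd_below_def less_eq_vec_def by auto
  show ?thesis unfolding less_eq_vec_def ybh_comp[OF ne bd]
    using x bdd by (auto intro: cInf_lower)
qed

lemma ybh_le_b:
  fixes \<sigma> :: "real^'n::finite \<Rightarrow> int extended"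
  assumes bd: "\<forall>x\<in>Eset \<sigma> b h. m \<le> x"
  shows "ybh b h \<sigma> \<le> b"
proof (cases "Eset \<sigma> b h = {}")
  case True then show ?thesis by (simp add: ybh_empty)
next
  case False
  then obtain x where x: "x \<in> Eset \<sigma> b h" by auto
  then have "x \<le> b" by (simp add: Eset_def)
  then show ?thesis using ybh_le_mem[OF bd x] by (rule order.trans[rotated])
qed

lemma bdd_of_norm:
  fixes E :: "(real^'n::finite) set"
  assumes "\<forall>x\<in>E. infnorm x \<le> r"
  shows "\<forall>x\<in>E. (\<chi> i. - r) \<le> x"
  using assms unfolding less_eq_vec_def infnorm_le_cart by (simp add: abs_le_iff) (metis minus_le_iff)

lemma ybh_bound:
  fixes \<sigma> :: "real^'n::finite \<Rightarrow> int extended"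
  assumes r: "\<forall>x\<in>Eset \<sigma> b h. infnorm x \<le> r"
  shows "infnorm (ybh b h \<sigma>) \<le> max r (infnorm b)"
proof (cases "Eset \<sigma> b h = {}")
  case True then show ?thesis by (simp add: ybh_empty)
next
  case False
  then obtain x0 where x0: "x0 \<in> Eset \<sigma> b h" by auto
  note bd = bdd_of_norm[OF r]
  have bdd: "bdd_below ((\<lambda>x. x$i) ` Eset \<sigma> b h)" for i
    using bd unfolding bdd_below_def less_eq_vec_def by auto
  have "\<bar>ybh b h \<sigma> $ i\<bar> \<le> r" for i
  proof -
    have "ybh b h \<sigma> $ i \<ge> - r"
      unfolding ybh_comp[OF False bd] using bd False
      by (intro cInf_greatest) (auto simp: less_eq_vec_def)
    moreover have "ybh b h \<sigma> $ i \<le> x0 $ i"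
      using ybh_le_mem[OF bd x0] by (simp add: less_eq_vec_def)
    moreover have "x0 $ i \<le> r" using r x0 component_le_infnorm_cart[of x0 i] by auto
    ultimately show ?thesis by auto
  qed
  then have "infnorm (ybh b h \<sigma>) \<le> r" by (rule infnorm_le_cartI)
  then show ?thesis by auto
qed

lemma mem_bound:
  fixes \<sigma> :: "real^'n::finite \<Rightarrow> int extended"
  assumes bd: "\<forall>x\<in>Eset \<sigma> b h. m \<le> x" and x: "x \<in> Eset \<sigma> b h"
  shows "infnorm x \<le> max (infnorm (ybh b h \<sigma>)) (infnorm b)"
proof (rule infnorm_le_cartI)
  fix i
  have "ybh b h \<sigma> $ i \<le> x $ i" using ybh_le_mem[OF bd x] by (simp add: less_eq_vec_def)
  moreover have "x $ i \<le> b $ i" using x by (simp add: Eset_def less_eq_vec_def)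
  moreover note component_le_infnorm_cart[of "ybh b h \<sigma>" i] component_le_infnorm_cart[of b i]
  ultimately show "\<bar>x $ i\<bar> \<le> max (infnorm (ybh b h \<sigma>)) (infnorm b)" by auto
qed

lemma ev_abs_int:
  assumes "eventually P (at_top :: real filter)"
  shows "eventually (\<lambda>h::int. P \<bar>real_of_int h\<bar>) at_bot"
proof -
  obtain X where X: "\<And>x. x \<ge> X \<Longrightarrow> P x" using assms by (auto simp: eventually_at_top_linorder)
  show ?thesis unfolding eventually_at_bot_linorder
  proof (intro exI[of _ "- \<lceil>X\<rceil>"] allI impI)
    fix n :: int assume "n \<le> - \<lceil>X\<rceil>"
    then have "\<bar>real_of_int n\<bar> \<ge> X" by linarith
    then show "P \<bar>real_of_int n\<bar>" by (rule X)
  qed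
qed

lemma ev_pow:
  assumes "0 < \<epsilon>" "0 < p"
  shows "eventually (\<lambda>x::real. c \<le> \<epsilon> * x powr p) at_top"
proof -
  have "((\<lambda>x. c * x powr (-p)) \<longlongrightarrow> 0) at_top"
    by (intro tendsto_mult_right_zero tendsto_neg_powr filterlim_ident) (use assms in auto)
  then have "eventually (\<lambda>x. c * x powr (-p) < \<epsilon>) at_top"
    using assms(1) by (rule order_tendstoD)
  moreover have "eventually (\<lambda>x::real. 0 < x) at_top" by (rule eventually_gt_at_top)
  ultimately show ?thesis
  proof eventually_elim
    case (elim x)
    have "c = c * x powr (-p) * x powr p" using elim(2)
      by (simp add: powr_minus field_simps)
    also have "\<dots> \<le> \<epsilon> * x powr p" using elim(1) by (intro mult_right_mono) auto
    finally show ?case .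
  qed
qed


definition UBf :: "real \<Rightarrow> (nat \<Rightarrow> real^'n::finite \<Rightarrow> int extended) \<Rightarrow> real^'n \<Rightarrow> bool" where
 "UBf p F b \<longleftrightarrow> (\<forall>\<epsilon>>0. eventually (\<lambda>h::int. \<forall>n x. x \<le> b \<longrightarrow> F n x \<ge> Fin h \<longrightarrow>
      infnorm x \<le> \<epsilon> * \<bar>real_of_int h\<bar> powr p) at_bot)"

lemma sup_tendsto0_iff:
  fixes g :: "'a \<Rightarrow> nat \<Rightarrow> real"
  assumes nn: "\<And>h n. 0 \<le> g h n"
  shows "((\<lambda>h. SUP n. ereal (g h n)) \<longlongrightarrow> 0) F \<longleftrightarrow> (\<forall>\<epsilon>>0. eventually (\<lambda>h. \<forall>n. g h n \<le> \<epsilon>) F)"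
proof
  assume t: "((\<lambda>h. SUP n. ereal (g h n)) \<longlongrightarrow> 0) F"
  show "\<forall>\<epsilon>>0. eventually (\<lambda>h. \<forall>n. g h n \<le> \<epsilon>) F"
  proof (intro allI impI)
    fix \<epsilon> :: real assume "\<epsilon> > 0"
    then have "eventually (\<lambda>h. (SUP n. ereal (g h n)) < ereal \<epsilon>) F"
      using t by (intro order_tendstoD(2)) auto
    then show "eventually (\<lambda>h. \<forall>n. g h n \<le> \<epsilon>) F"
    proof eventually_elim
      case (elim h)
      show ?case
      proof
        fix n
        have "ereal (g h n) \<le> (SUP n. ereal (g h n))" by (rule SUP_upper) auto
        with elim have "ereal (g h n) < ereal \<epsilon>" by (rule order.strict_trans1[rotated])
        then show "g h n \<le> \<epsilon>" by simp
      qed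
    qed
  qed
next
  assume e: "\<forall>\<epsilon>>0. eventually (\<lambda>h. \<forall>n. g h n \<le> \<epsilon>) F"
  show "((\<lambda>h. SUP n. ereal (g h n)) \<longlongrightarrow> 0) F"
  proof (rule order_tendstoI)
    fix l :: ereal assume "l < 0"
    show "eventually (\<lambda>h. l < (SUP n. ereal (g h n))) F"
    proof (rule always_eventually, intro allI)
      fix h
      have "ereal (g h 0) \<le> (SUP n. ereal (g h n))" by (rule SUP_upper) auto
      with \<open>l < 0\<close> nn[of h 0] show "l < (SUP n. ereal (g h n))"
        by (meson ereal_less_eq(5) order_less_le_trans)
    qed
  next
    fix u :: ereal assume "u > 0"
    obtain \<epsilon> where ep: "0 < \<epsilon>" "ereal \<epsilon> < u"
    proof (cases u)
      case (real r) with \<open>u > 0\<close> show ?thesis by (intro that[of "r/2"]) auto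
    next
      case PInf then show ?thesis by (intro that[of 1]) auto
    next
      case MInf with \<open>u > 0\<close> show ?thesis by auto
    qed
    from e ep(1) have "eventually (\<lambda>h. \<forall>n. g h n \<le> \<epsilon>) F" by auto
    then show "eventually (\<lambda>h. (SUP n. ereal (g h n)) < u) F"
    proof eventually_elim
      case (elim h)
      then have "(SUP n. ereal (g h n)) \<le> ereal \<epsilon>" by (intro SUP_least) auto
      with ep show ?case by auto
    qed
  qed
qed

lemma UB_imp_A:
  fixes F :: "nat \<Rightarrow> real^'n::finite \<Rightarrow> int extended"
  assumes p: "0 < p" and ub: "UBf p F b"
  shows "\<forall>\<epsilon>>0. eventually (\<lambda>h::int. \<forall>n. \<bar>real_of_int h\<bar> powr (-p) * infnorm (ybh b h (F n)) \<le> \<epsilon>) at_bot"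
proof (intro allI impI)
  fix \<epsilon> :: real assume ep: "\<epsilon> > 0"
  have e1: "eventually (\<lambda>h::int. \<forall>n x. x \<le> b \<longrightarrow> F n x \<ge> Fin h \<longrightarrow> infnorm x \<le> \<epsilon> * \<bar>real_of_int h\<bar> powr p) at_bot"
    using ub ep unfolding UBf_def by auto
  have e2: "eventually (\<lambda>h::int. infnorm b \<le> \<epsilon> * \<bar>real_of_int h\<bar> powr p \<and> 0 < \<bar>real_of_int h\<bar>) at_bot"
    by (intro ev_abs_int eventually_conj ev_pow eventually_gt_at_top ep p)
  from e1 e2 show "eventually (\<lambda>h::int. \<forall>n. \<bar>real_of_int h\<bar> powr (-p) * infnorm (ybh b h (F n)) \<le> \<epsilon>) at_bot"
  proof eventually_elim
    case (elim h)
    show ?case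
    proof
      fix n
      have "\<forall>x\<in>Eset (F n) b h. infnorm x \<le> \<epsilon> * \<bar>real_of_int h\<bar> powr p"
        using elim(1) by (auto simp: Eset_def)
      then have "infnorm (ybh b h (F n)) \<le> max (\<epsilon> * \<bar>real_of_int h\<bar> powr p) (infnorm b)"
        by (rule ybh_bound)
      also have "\<dots> = \<epsilon> * \<bar>real_of_int h\<bar> powr p" using elim(2) by auto
      finally have "\<bar>real_of_int h\<bar> powr (-p) * infnorm (ybh b h (F n)) \<le> \<bar>real_of_int h\<bar> powr (-p) * (\<epsilon> * \<bar>real_of_int h\<bar> powr p)"
        by (intro mult_left_mono) auto
      also have "\<dots> = \<epsilon>" using elim(2) by (simp add: powr_minus field_simps)
      finally show "\<bar>real_of_int h\<bar> powr (-p) * infnorm (ybh b h (F n)) \<le> \<epsilon>" .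
    qed
  qed
qed

lemma A_imp_UB:
  fixes F :: "nat \<Rightarrow> real^'n::finite \<Rightarrow> int extended"
  assumes p: "0 < p" and bd: "\<And>n h. \<exists>m. \<forall>x\<in>Eset (F n) b h. m \<le> x"
    and A: "\<forall>\<epsilon>>0. eventually (\<lambda>h::int. \<forall>n. \<bar>real_of_int h\<bar> powr (-p) * infnorm (ybh b h (F n)) \<le> \<epsilon>) at_bot"
  shows "UBf p F b"
  unfolding UBf_def
proof (intro allI impI)
  fix \<epsilon> :: real assume ep: "\<epsilon> > 0"
  have e1: "eventually (\<lambda>h::int. \<forall>n. \<bar>real_of_int h\<bar> powr (-p) * infnorm (ybh b h (F n)) \<le> \<epsilon>) at_bot"
    using A ep by auto
  have e2: "eventually (\<lambda>h::int. infnorm b \<le> \<epsilon> * \<bar>real_of_int h\<bar> powr p \<and> 0 < \<bar>real_of_int h\<bar>) at_bot"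
    by (intro ev_abs_int eventually_conj ev_pow eventually_gt_at_top ep p)
  from e1 e2 show "eventually (\<lambda>h::int. \<forall>n x. x \<le> b \<longrightarrow> F n x \<ge> Fin h \<longrightarrow> infnorm x \<le> \<epsilon> * \<bar>real_of_int h\<bar> powr p) at_bot"
  proof eventually_elim
    case (elim h)
    show ?case
    proof (intro allI impI)
      fix n x assume x: "x \<le> b" "Fin h \<le> F n x"
      obtain m where m: "\<forall>x\<in>Eset (F n) b h. m \<le> x" using bd by blast
      have xe: "x \<in> Eset (F n) b h" using x by (simp add: Eset_def)
      have "infnorm (ybh b h (F n)) = \<bar>real_of_int h\<bar> powr p * (\<bar>real_of_int h\<bar> powr (-p) * infnorm (ybh b h (F n)))"
        using elim(2) by (simp add: powr_minus field_simps)
      also have "\<dots> \<le> \<bar>real_of_int h\<bar> powr p * \<epsilon>" using elim(1) by (intro mult_left_mono) auto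
      finally have "infnorm (ybh b h (F n)) \<le> \<epsilon> * \<bar>real_of_int h\<bar> powr p" by (simp add: mult.commute)
      with mem_bound[OF m xe] elim(2) show "infnorm x \<le> \<epsilon> * \<bar>real_of_int h\<bar> powr p" by auto
    qed
  qed
qed


lemma tendsto_MInfty2: "(f \<longlongrightarrow> MInfty) F \<longleftrightarrow> (\<forall>r. eventually (\<lambda>x. f x < ereal r) F)"
  using tendsto_MInfty[of f F] by simp

lemma powr_pq: fixes a p q :: real assumes "0 \<le> a" "p * q = 1" shows "(a powr q) powr p = a"
proof -
  have "(a powr q) powr p = a powr (q * p)" by (rule powr_powr)
  also have "q * p = 1" using assms(2) by (simp add: mult.commute)
  finally show ?thesis using assms(1) by simp
qed

lemma powr_pq': fixes a p q :: real assumes "0 < a" "p * q = 1" shows "(a powr (- q)) powr p = 1 / a"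
proof -
  have "(a powr (- q)) powr p = a powr (- q * p)" by (rule powr_powr)
  also have "- q * p = - 1" using assms(2) by (simp add: mult.commute)
  finally show ?thesis using assms(1) by (simp add: powr_neg_one)
qed

lemma B_imp_UB:
  fixes F :: "nat \<Rightarrow> real^'n::finite \<Rightarrow> int extended"
  assumes p: "0 < p" and q: "0 < q" and pq: "p * q = 1"
    and B: "((\<lambda>M::real. SUP n. SUP y\<in>{y. y \<le> b \<and> infnorm y \<ge> M}.
              ereal (infnorm y powr (- q)) * zs_ereal (F n y)) \<longlongrightarrow> MInfty) at_top"
  shows "UBf p F b"
  unfolding UBf_def
proof (intro allI impI)
  fix \<epsilon> :: real assume ep: "\<epsilon> > 0"
  define K where "K = \<epsilon> powr (- q)"
  have K: "K > 0" using ep by (simp add: K_def)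
  have Kp: "K powr p = 1 / \<epsilon>" unfolding K_def using ep pq by (rule powr_pq')
  have "eventually (\<lambda>M. (SUP n. SUP y\<in>{y. y \<le> b \<and> infnorm y \<ge> M}.
              ereal (infnorm y powr (- q)) * zs_ereal (F n y)) < ereal (- K)) at_top"
    using B unfolding tendsto_MInfty2 by auto
  then obtain M0 where M0: "\<And>M. M \<ge> M0 \<Longrightarrow> (SUP n. SUP y\<in>{y. y \<le> b \<and> infnorm y \<ge> M}.
              ereal (infnorm y powr (- q)) * zs_ereal (F n y)) < ereal (- K)"
    by (auto simp: eventually_at_top_linorder)
  define M1 where "M1 = max M0 1"
  have hM: "ereal (infnorm y powr (- q)) * zs_ereal (F n y) < ereal (- K)"
    if "y \<le> b" "M1 \<le> infnorm y" for n y
  proof -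
    have "ereal (infnorm y powr (- q)) * zs_ereal (F n y) \<le> (SUP n. SUP y\<in>{y. y \<le> b \<and> infnorm y \<ge> M1}.
              ereal (infnorm y powr (- q)) * zs_ereal (F n y))"
      by (rule SUP_upper2[of n]) (use that in \<open>auto intro: SUP_upper\<close>)
    also have "\<dots> < ereal (- K)" by (rule M0) (simp add: M1_def)
    finally show ?thesis .
  qed
  have ev: "eventually (\<lambda>h::int. M1 \<le> \<epsilon> * \<bar>real_of_int h\<bar> powr p \<and> 0 < \<bar>real_of_int h\<bar>) at_bot"
    by (intro ev_abs_int eventually_conj ev_pow eventually_gt_at_top ep p)
  then show "eventually (\<lambda>h::int. \<forall>n x. x \<le> b \<longrightarrow> F n x \<ge> Fin h \<longrightarrow> infnorm x \<le> \<epsilon> * \<bar>real_of_int h\<bar> powr p) at_bot"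
  proof eventually_elim
    case (elim h)
    show ?case
    proof (intro allI impI)
      fix n x assume x: "x \<le> b" "Fin h \<le> F n x"
      show "infnorm x \<le> \<epsilon> * \<bar>real_of_int h\<bar> powr p"
      proof (cases "infnorm x < M1")
        case True then show ?thesis using elim by auto
      next
        case False
        then have hx: "ereal (infnorm x powr (- q)) * zs_ereal (F n x) < ereal (- K)"
          using hM x by auto
        define a where "a = infnorm x"
        have a: "a > 0" using False by (simp add: a_def M1_def)
        show ?thesis
        proof (cases "F n x")
          case (Fin k)
          then have hk: "h \<le> k" using x by simp
          define t where "t = a powr q"
          have t: "t > 0" using a by (simp add: t_def)
          have amq: "a powr (- q) = 1 / t" using a by (simp add: t_def powr_minus divide_inverse)
          from hx Fin have "a powr (- q) * k < - K" by (simp add: zs_ereal_def a_def)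
          then have "k / t < - K" by (simp add: amq)
          moreover have "h / t \<le> k / t" using hk t by (intro divide_right_mono) auto
          ultimately have "h / t < - K" by linarith
          then have "h < - K * t" using t by (simp add: pos_divide_less_eq)
          moreover have "0 < K * t" using K t by simp
          ultimately have "K * t < \<bar>real_of_int h\<bar>" by linarith
          then have "a powr q < \<bar>real_of_int h\<bar> / K" using K by (simp add: t_def pos_less_divide_eq mult.commute)
          then have "(a powr q) powr p < (\<bar>real_of_int h\<bar> / K) powr p"
            using p by (intro powr_less_mono2) auto
          also have "(\<bar>real_of_int h\<bar> / K) powr p = \<epsilon> * \<bar>real_of_int h\<bar> powr p"
            using K Kp ep by (simp add: powr_divide)
          finally have "(a powr q) powr p < \<epsilon> * \<bar>real_of_int h\<bar> powr p" .
          moreover have "(a powr q) powr p = a" using a pq by (intro powr_pq) auto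
          ultimately show ?thesis by (simp add: a_def)
        next
          case Pinf
          then show ?thesis using hx a by (simp add: zs_ereal_def a_def)
        next
          case Minf
          then show ?thesis using x by simp
        qed
      qed
    qed
  qed
qed

lemma UB_imp_B:
  fixes F :: "nat \<Rightarrow> real^'n::finite \<Rightarrow> int extended"
  assumes p: "0 < p" and q: "0 < q" and pq: "p * q = 1"
    and ub: "UBf p F b"
  shows "((\<lambda>M::real. SUP n. SUP y\<in>{y. y \<le> b \<and> infnorm y \<ge> M}.
              ereal (infnorm y powr (- q)) * zs_ereal (F n y)) \<longlongrightarrow> MInfty) at_top"
  unfolding tendsto_MInfty2
proof
  fix r :: real
  define K where "K = max 1 (1 - r)"
  have K: "K > 0" "- K < r" by (auto simp: K_def)
  define \<epsilon> where "\<epsilon> = K powr (- p)"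
  have ep: "\<epsilon> > 0" using K by (simp add: \<epsilon>_def)
  have epq: "\<epsilon> powr q = 1 / K" unfolding \<epsilon>_def using K pq by (intro powr_pq') (auto simp: mult.commute)
  have "eventually (\<lambda>h::int. \<forall>n x. x \<le> b \<longrightarrow> F n x \<ge> Fin h \<longrightarrow> infnorm x \<le> \<epsilon> * \<bar>real_of_int h\<bar> powr p) at_bot"
    using ub ep unfolding UBf_def by auto
  then obtain N where N: "\<And>h n x. h \<le> N \<Longrightarrow> x \<le> b \<Longrightarrow> F n x \<ge> Fin h \<Longrightarrow> infnorm x \<le> \<epsilon> * \<bar>real_of_int h\<bar> powr p"
    by (auto simp: eventually_at_bot_linorder)
  define h0 where "h0 = min N (-1)"
  define M0 where "M0 = \<epsilon> * \<bar>real_of_int h0\<bar> powr p + 1"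
  show "eventually (\<lambda>M. (SUP n. SUP y\<in>{y. y \<le> b \<and> infnorm y \<ge> M}.
              ereal (infnorm y powr (- q)) * zs_ereal (F n y)) < ereal r) at_top"
    using eventually_ge_at_top[of "max M0 1"]
  proof eventually_elim
    case (elim M)
    have "(SUP n. SUP y\<in>{y. y \<le> b \<and> infnorm y \<ge> M}.
              ereal (infnorm y powr (- q)) * zs_ereal (F n y)) \<le> ereal (- K)"
    proof (intro SUP_least)
      fix n y assume y: "y \<in> {y. y \<le> b \<and> M \<le> infnorm y}"
      define a where "a = infnorm y"
      have a: "a \<ge> M0" "a \<ge> 1" using y elim by (auto simp: a_def)
      have nh0: "\<not> Fin h0 \<le> F n y"
      proof
        assume "Fin h0 \<le> F n y"
        then have "a \<le> \<epsilon> * \<bar>real_of_int h0\<bar> powr p" using N[of h0 y n] y by (auto simp: h0_def a_def)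
        then show False using a unfolding M0_def by linarith
      qed
      show "ereal (infnorm y powr (- q)) * zs_ereal (F n y) \<le> ereal (- K)"
      proof (cases "F n y")
        case (Fin k)
        then have kh: "k < h0" using nh0 by simp
        then have "a \<le> \<epsilon> * \<bar>real_of_int k\<bar> powr p" using N[of k y n] y Fin by (auto simp: h0_def a_def)
        then have "a powr q \<le> (\<epsilon> * \<bar>real_of_int k\<bar> powr p) powr q"
          using q a by (intro powr_mono2) auto
        also have "\<dots> = \<epsilon> powr q * (\<bar>real_of_int k\<bar> powr p) powr q"
          by (metis ep less_imp_le powr_ge_zero powr_mult)
        also have "(\<bar>real_of_int k\<bar> powr p) powr q = \<bar>real_of_int k\<bar>"
        proof (rule powr_pq) show "q * p = 1" using pq by (metis mult.commute) qed auto
        also have "\<epsilon> powr q * \<bar>real_of_int k\<bar> = \<bar>real_of_int k\<bar> / K" by (simp add: epq)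
        finally have "a powr q \<le> \<bar>real_of_int k\<bar> / K" .
        then have "a powr q * K \<le> \<bar>real_of_int k\<bar>" using K by (simp add: pos_le_divide_eq)
        moreover have "\<bar>real_of_int k\<bar> = - k" using kh by (simp add: h0_def)
        ultimately have "k \<le> - K * a powr q" by (simp add: mult.commute[of K])
        then have "a powr (- q) * k \<le> a powr (- q) * (- K * a powr q)"
          by (intro mult_left_mono) auto
        also have "\<dots> = - K * (a powr (- q) * a powr q)" by (simp add: algebra_simps)
        also have "a powr (- q) * a powr q = 1" using a by (simp add: powr_minus)
        finally have "a powr (- q) * k \<le> - K" by simp
        then show ?thesis using Fin by (simp add: zs_ereal_def a_def)
      next
        case Pinf then show ?thesis using nh0 by simp
      next
        case Minf then show ?thesis using a by (simp add: zs_ereal_def a_def)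
      qed
    qed
    also have "\<dots> < ereal r" using K by simp
    finally show ?case .
  qed
qed

lemma sigma_UB:
  fixes \<sigma> :: "real^'n::finite \<Rightarrow> int extended"
  assumes s: "\<sigma> \<in> Sigma_set" and p: "0 < p" and q: "0 < q" and pq: "p * q = 1"
    and qd: "q = real CARD('n) / (real CARD('n) + 1)"
  shows "UBf p (\<lambda>n. \<sigma>) b"
proof (rule B_imp_UB[OF p q pq])
  have "((\<lambda>M::real. SUP y\<in>{y. y \<le> b \<and> infnorm y \<ge> M}.
             ereal (infnorm y powr (- real CARD('n) / (real CARD('n) + 1))) * zs_ereal (\<sigma> y)) \<longlongrightarrow> MInfty) at_top"
    using s unfolding Sigma_set_def mem_Collect_eq by blast
  then show "((\<lambda>M::real. SUP n::nat. SUP y\<in>{y. y \<le> b \<and> infnorm y \<ge> M}.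
              ereal (infnorm y powr (- q)) * zs_ereal (\<sigma> y)) \<longlongrightarrow> MInfty) at_top"
    by (simp add: qd)
qed

lemma UB_single_bdd:
  fixes \<sigma> :: "real^'n::finite \<Rightarrow> int extended"
  assumes ub: "UBf p (\<lambda>n. \<sigma>) b"
  shows "\<exists>r. \<forall>x\<in>Eset \<sigma> b h. infnorm x \<le> r"
proof -
  have "eventually (\<lambda>h::int. \<forall>n::nat. \<forall>x. x \<le> b \<longrightarrow> \<sigma> x \<ge> Fin h \<longrightarrow> infnorm x \<le> 1 * \<bar>real_of_int h\<bar> powr p) at_bot"
    using ub[unfolded UBf_def, rule_format, of 1] by simp
  then obtain N where N: "\<And>h' x. h' \<le> N \<Longrightarrow> x \<le> b \<Longrightarrow> \<sigma> x \<ge> Fin h' \<Longrightarrow> infnorm x \<le> \<bar>real_of_int h'\<bar> powr p"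
    unfolding eventually_at_bot_linorder by auto
  define h' where "h' = min N h"
  have "\<forall>x\<in>Eset \<sigma> b h. infnorm x \<le> \<bar>real_of_int h'\<bar> powr p"
  proof
    fix x assume x: "x \<in> Eset \<sigma> b h"
    have "Fin h' \<le> Fin h" by (simp add: h'_def)
    also have "Fin h \<le> \<sigma> x" using x by (simp add: Eset_def)
    finally have "Fin h' \<le> \<sigma> x" .
    moreover have "x \<le> b" using x by (simp add: Eset_def)
    ultimately show "infnorm x \<le> \<bar>real_of_int h'\<bar> powr p" by (intro N) (auto simp: h'_def)
  qed
  then show ?thesis by blast
qed


lemma emeasure_cbox_cart:
  fixes l u :: "real^'n::finite"
  assumes "\<And>i. l$i \<le> u$i"
  shows "emeasure lborel (cbox l u) = ennreal (\<Prod>i\<in>UNIV. u$i - l$i)"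
proof -
  have "emeasure lborel (cbox l u) = ennreal (measure lborel (cbox l u))"
    by (rule emeasure_eq_ennreal_measure) (use emeasure_lborel_cbox_finite[of l u] in auto)
  also have "measure lborel (cbox l u) = (\<Prod>i\<in>UNIV. u$i - l$i)"
    by (rule content_cbox_cart) (use assms in \<open>simp add: interval_ne_empty_cart\<close>)
  finally show ?thesis .
qed

lemma theta_small_exists:
  fixes \<rho> \<sigma> :: "real^'n::finite \<Rightarrow> int extended"
  assumes ep: "\<epsilon> > 0"
    and Th: "Theta \<rho> \<sigma> < ennreal (exp (- (infnorm b + 1)) * min 1 \<epsilon>)"
  shows "\<exists>b'. b \<le> b' \<and> b' \<le> (\<chi> i. b$i + 1) \<and> theta b' \<rho> \<sigma> \<le> ennreal \<epsilon>"
proof (rule ccontr)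
  assume na: "\<not> ?thesis"
  define b1 :: "real^'n" where "b1 = (\<chi> i. b$i + 1)"
  define c where "c = exp (- (infnorm b + 1)) * min 1 \<epsilon>"
  have c: "c > 0" using ep by (simp add: c_def)
  have "ennreal c * indicator (cbox b b1) x \<le> ennreal (exp (- infnorm x)) * min 1 (theta x \<rho> \<sigma>)" for x
  proof (cases "x \<in> cbox b b1")
    case True
    then have xb: "b \<le> x" "x \<le> b1" by (auto simp: interval_cbox_cart[symmetric])
    then have "\<not> theta x \<rho> \<sigma> \<le> ennreal \<epsilon>" using na by (auto simp: b1_def)
    then have th: "ennreal \<epsilon> < theta x \<rho> \<sigma>" by simp
    have nx: "infnorm x \<le> infnorm b + 1"
    proof (rule infnorm_le_cartI)
      fix i
      have "b$i \<le> x$i" "x$i \<le> b$i + 1" using xb by (auto simp: less_eq_vec_def b1_def)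
      then show "\<bar>x$i\<bar> \<le> infnorm b + 1" using component_le_infnorm_cart[of b i] by auto
    qed
    have "ennreal c = ennreal (exp (- (infnorm b + 1))) * ennreal (min 1 \<epsilon>)"
      unfolding c_def using ep by (simp add: ennreal_mult)
    also have "\<dots> \<le> ennreal (exp (- infnorm x)) * min 1 (theta x \<rho> \<sigma>)"
    proof (intro mult_mono)
      show "ennreal (exp (- (infnorm b + 1))) \<le> ennreal (exp (- infnorm x))"
        using nx by (intro ennreal_leI) auto
      show "ennreal (min 1 \<epsilon>) \<le> min 1 (theta x \<rho> \<sigma>)"
      proof (rule min.boundedI)
        show "ennreal (min 1 \<epsilon>) \<le> 1" by simp
        have "ennreal (min 1 \<epsilon>) \<le> ennreal \<epsilon>" by (intro ennreal_leI) auto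
        then show "ennreal (min 1 \<epsilon>) \<le> theta x \<rho> \<sigma>" using th by simp
      qed
    qed auto
    finally show ?thesis using True by simp
  next
    case False then show ?thesis by simp
  qed
  then have "(\<integral>\<^sup>+x. ennreal c * indicator (cbox b b1) x \<partial>lborel) \<le> Theta \<rho> \<sigma>"
    unfolding Theta_def by (intro nn_integral_mono) auto
  moreover have "(\<integral>\<^sup>+x. ennreal c * indicator (cbox b b1) x \<partial>lborel) = ennreal c"
  proof -
    have "emeasure lborel (cbox b b1) = ennreal (\<Prod>i\<in>UNIV. b1$i - b$i)"
      by (rule emeasure_cbox_cart) (simp add: b1_def)
    also have "(\<Prod>i\<in>UNIV. b1$i - b$i) = 1" by (simp add: b1_def)
    finally show ?thesis by (simp add: nn_integral_cmult_indicator)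
  qed
  ultimately show False using Th by (simp add: c_def)
qed


lemma theta_le_imp:
  fixes \<rho> \<sigma> :: "real^'n::finite \<Rightarrow> int extended"
  assumes "theta b' \<rho> \<sigma> \<le> ennreal e" "h \<le> -1" "e \<ge> 0"
  shows "\<bar>real_of_int h\<bar> powr (- (real CARD('n) + 1) / real CARD('n)) * infnorm (ybh b' h \<rho> - ybh b' h \<sigma>) \<le> e"
proof -
  have "ennreal (\<bar>real_of_int h\<bar> powr (- (real CARD('n) + 1) / real CARD('n)) * infnorm (ybh b' h \<rho> - ybh b' h \<sigma>))
        \<le> theta b' \<rho> \<sigma>"
    unfolding theta_def by (rule SUP_upper) (use assms in auto)
  also have "\<dots> \<le> ennreal e" by fact
  finally show ?thesis using assms(3) by (simp add: ennreal_le_iff)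
qed

lemma pow_mul_le:
  fixes D e x p :: real
  assumes "x > 0" "x powr (- p) * D \<le> e"
  shows "D \<le> e * x powr p"
proof -
  have "D = x powr p * (x powr (- p) * D)" using assms(1) by (simp add: powr_minus)
  also have "\<dots> \<le> x powr p * e" using assms by (intro mult_left_mono) auto
  finally show ?thesis by (simp add: mult.commute)
qed

lemma Theta_imp_UB:
  fixes \<sigma>s :: "nat \<Rightarrow> real^'n::finite \<Rightarrow> int extended" and \<sigma> :: "real^'n \<Rightarrow> int extended"
  assumes pd: "p = (real CARD('n) + 1) / real CARD('n)"
    and bd: "\<And>n b h. \<exists>m. \<forall>x\<in>Eset (\<sigma>s n) b h. m \<le> x"
    and ubn: "\<And>n. UBf p (\<lambda>_. \<sigma>s n) b"
    and ubs: "UBf p (\<lambda>_. \<sigma>) (\<chi> i. b$i + 1)"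
    and T: "(\<lambda>n. Theta (\<sigma>s n) \<sigma>) \<longlonglongrightarrow> 0"
  shows "UBf p \<sigma>s b"
  unfolding UBf_def
proof (intro allI impI)
  fix \<epsilon> :: real assume ep: "\<epsilon> > 0"
  define e where "e = \<epsilon> / 4"
  have e: "e > 0" using ep by (simp add: e_def)
  define b1 :: "real^'n" where "b1 = (\<chi> i. b$i + 1)"
  have wp: "- (real CARD('n) + 1) / real CARD('n) = - p" unfolding pd by (rule minus_divide_left[symmetric])
  have p: "p > 0" by (simp add: pd)
  define c where "c = exp (- (infnorm b + 1)) * min 1 e"
  have c: "c > 0" using e by (simp add: c_def)
  have "eventually (\<lambda>n. Theta (\<sigma>s n) \<sigma> < ennreal c) sequentially"
    using T c by (intro order_tendstoD(2)) auto
  then obtain N where N: "\<And>n. n \<ge> N \<Longrightarrow> Theta (\<sigma>s n) \<sigma> < ennreal c"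
    unfolding eventually_sequentially by auto
  have "\<forall>n. n \<ge> N \<longrightarrow> (\<exists>b'. b \<le> b' \<and> b' \<le> b1 \<and> theta b' (\<sigma>s n) \<sigma> \<le> ennreal e)"
    using theta_small_exists[OF e] N unfolding b1_def c_def by blast
  then obtain B where B: "\<And>n. n \<ge> N \<Longrightarrow> b \<le> B n \<and> B n \<le> b1 \<and> theta (B n) (\<sigma>s n) \<sigma> \<le> ennreal e"
    by metis
  have E1: "eventually (\<lambda>h::int. \<forall>(n::nat) x. x \<le> b1 \<longrightarrow> \<sigma> x \<ge> Fin h \<longrightarrow> infnorm x \<le> e * \<bar>real_of_int h\<bar> powr p) at_bot"
    using ubs e unfolding UBf_def b1_def by blast
  have E2: "eventually (\<lambda>h::int. \<forall>n\<in>{..<N}. \<forall>(m::nat) x. x \<le> b \<longrightarrow> \<sigma>s n x \<ge> Fin h \<longrightarrow> infnorm x \<le> \<epsilon> * \<bar>real_of_int h\<bar> powr p) at_bot"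
    using ubn ep unfolding UBf_def by (intro eventually_ball_finite) auto
  have E3: "eventually (\<lambda>h::int. infnorm b + 1 \<le> e * \<bar>real_of_int h\<bar> powr p \<and> 0 < \<bar>real_of_int h\<bar>) at_bot"
    by (intro ev_abs_int eventually_conj ev_pow eventually_gt_at_top e p)
  have E4: "eventually (\<lambda>h::int. h \<le> -1) at_bot" by simp
  from E1 E2 E3 E4 show "eventually (\<lambda>h::int. \<forall>n x. x \<le> b \<longrightarrow> \<sigma>s n x \<ge> Fin h \<longrightarrow> infnorm x \<le> \<epsilon> * \<bar>real_of_int h\<bar> powr p) at_bot"
  proof eventually_elim
    case (elim h)
    show ?case
    proof (intro allI impI)
      fix n x assume x: "x \<le> b" "Fin h \<le> \<sigma>s n x"
      show "infnorm x \<le> \<epsilon> * \<bar>real_of_int h\<bar> powr p"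
      proof (cases "n < N")
        case True then show ?thesis using elim(2) x by auto
      next
        case False
        then have Bn: "b \<le> B n" "B n \<le> b1" "theta (B n) (\<sigma>s n) \<sigma> \<le> ennreal e" using B by auto
        define b' where "b' = B n"
        have xe: "x \<in> Eset (\<sigma>s n) b' h" using x Bn by (auto simp: Eset_def b'_def intro: order.trans)
        obtain m where m: "\<forall>x\<in>Eset (\<sigma>s n) b' h. m \<le> x" using bd by blast
        have mb: "infnorm x \<le> max (infnorm (ybh b' h (\<sigma>s n))) (infnorm b')"
          by (rule mem_bound[OF m xe])
        have nb': "infnorm b' \<le> infnorm b + 1"
        proof (rule infnorm_le_cartI)
          fix i
          have "b$i \<le> b'$i" "b'$i \<le> b$i + 1" using Bn by (auto simp: less_eq_vec_def b1_def b'_def)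
          then show "\<bar>b'$i\<bar> \<le> infnorm b + 1" using component_le_infnorm_cart[of b i] by auto
        qed
        have "\<bar>real_of_int h\<bar> powr (- p) * infnorm (ybh b' h (\<sigma>s n) - ybh b' h \<sigma>) \<le> e"
          using theta_le_imp[of b' "\<sigma>s n" \<sigma> e h] Bn elim(4) e unfolding wp b'_def by linarith
        then have df: "infnorm (ybh b' h (\<sigma>s n) - ybh b' h \<sigma>) \<le> e * \<bar>real_of_int h\<bar> powr p"
          using elim(3) by (intro pow_mul_le) auto
        have "\<forall>x'\<in>Eset \<sigma> b' h. infnorm x' \<le> e * \<bar>real_of_int h\<bar> powr p"
        proof
          fix x' assume "x' \<in> Eset \<sigma> b' h"
          then have "x' \<le> b1" "Fin h \<le> \<sigma> x'" using Bn by (auto simp: Eset_def b'_def intro: order.trans)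
          then show "infnorm x' \<le> e * \<bar>real_of_int h\<bar> powr p" using elim(1) by blast
        qed
        then have ys: "infnorm (ybh b' h \<sigma>) \<le> max (e * \<bar>real_of_int h\<bar> powr p) (infnorm b')"
          by (rule ybh_bound)
        have tri: "infnorm (ybh b' h (\<sigma>s n)) \<le> infnorm (ybh b' h \<sigma>) + infnorm (ybh b' h (\<sigma>s n) - ybh b' h \<sigma>)"
          using infnorm_triangle[of "ybh b' h \<sigma>" "ybh b' h (\<sigma>s n) - ybh b' h \<sigma>"] by simp
        have "0 \<le> e * \<bar>real_of_int h\<bar> powr p" using e by simp
        then show ?thesis using mb nb' df ys tri elim(3) unfolding e_def by auto
      qed
    qed
  qed
qed


lemma int_exp_1d:
  fixes a :: real
  assumes a: "a > 0"
  shows "(\<integral>\<^sup>+t. ennreal (exp (- a * \<bar>t\<bar>)) \<partial>lborel) < \<infinity>"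
proof -
  define g where "g k t = ennreal (exp (- a * real k)) * (indicator {real k..real k + 1} t + indicator {- (real k + 1)..- real k} t)" for k :: nat and t :: real
  have pw: "ennreal (exp (- a * \<bar>t\<bar>)) \<le> (\<Sum>k. g k t)" for t
  proof -
    define k where "k = nat \<lfloor>\<bar>t\<bar>\<rfloor>"
    have k1: "real k \<le> \<bar>t\<bar>" "\<bar>t\<bar> \<le> real k + 1" unfolding k_def by linarith+
    have "ennreal (exp (- a * \<bar>t\<bar>)) \<le> g k t"
    proof -
      have "exp (- a * \<bar>t\<bar>) \<le> exp (- a * real k)" using k1 a by auto
      moreover have "1 \<le> indicator {real k..real k + 1} t + (indicator {- (real k + 1)..- real k} t :: ennreal)"
        using k1 by (cases "t \<ge> 0") (auto simp: indicator_def)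
      ultimately have "ennreal (exp (- a * \<bar>t\<bar>)) * 1 \<le> ennreal (exp (- a * real k)) * (indicator {real k..real k + 1} t + indicator {- (real k + 1)..- real k} t)"
        by (intro mult_mono) (auto intro: ennreal_leI)
      then show ?thesis by (simp add: g_def)
    qed
    also have "g k t \<le> (\<Sum>k. g k t)"
      using sum_le_suminf[of "\<lambda>k. g k t" "{k}"] by (auto intro: summableI)
    finally show ?thesis .
  qed
  have "(\<integral>\<^sup>+t. ennreal (exp (- a * \<bar>t\<bar>)) \<partial>lborel) \<le> (\<integral>\<^sup>+t. (\<Sum>k. g k t) \<partial>lborel)"
    by (intro nn_integral_mono pw)
  also have "\<dots> = (\<Sum>k. \<integral>\<^sup>+t. g k t \<partial>lborel)"
    by (rule nn_integral_suminf) (simp add: g_def)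
  also have "(\<lambda>k. \<integral>\<^sup>+t. g k t \<partial>lborel) = (\<lambda>k. ennreal (2 * exp (- a) ^ k))"
  proof
    fix k
    have "(\<integral>\<^sup>+t. g k t \<partial>lborel) = ennreal (exp (- a * real k)) * ((\<integral>\<^sup>+t. indicator {real k..real k + 1} t \<partial>lborel) + (\<integral>\<^sup>+t. indicator {- (real k + 1)..- real k} t \<partial>lborel))"
      unfolding g_def by (simp add: nn_integral_cmult nn_integral_add)
    also have "\<dots> = ennreal (exp (- a * real k)) * 2" by (simp add: one_add_one)
    also have "exp (- a * real k) = exp (- a) ^ k" using exp_of_nat_mult[of k "- a"] by (simp add: mult.commute)
    finally show "(\<integral>\<^sup>+t. g k t \<partial>lborel) = ennreal (2 * exp (- a) ^ k)"
      by (simp add: ennreal_mult mult.commute)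
  qed
  also have "(\<Sum>k. ennreal (2 * exp (- a) ^ k)) = ennreal (\<Sum>k. 2 * exp (- a) ^ k)"
    using a by (intro suminf_ennreal2) (auto intro!: summable_mult summable_geometric)
  also have "\<dots> < \<infinity>" by simp
  finally show ?thesis .
qed

lemma int_exp_infnorm:
  assumes c: "c > 0"
  shows "(\<integral>\<^sup>+x. ennreal (exp (- c * infnorm (x::'a::euclidean_space))) \<partial>lborel) < \<infinity>"
proof -
  define a where "a = c / real DIM('a)"
  have a: "a > 0" using c by (simp add: a_def)
  have pw: "ennreal (exp (- c * infnorm x)) \<le> (\<Prod>b\<in>Basis. ennreal (exp (- a * \<bar>x \<bullet> b\<bar>)))" for x :: 'a
  proof -
    have "(\<Sum>b\<in>Basis. \<bar>x \<bullet> b\<bar>) \<le> of_nat (card (Basis :: 'a set)) * infnorm x"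
      by (rule sum_bounded_above) (rule Basis_le_infnorm)
    then have "a * (\<Sum>b\<in>Basis. \<bar>x \<bullet> b\<bar>) \<le> a * (real DIM('a) * infnorm x)"
      using a by (intro mult_left_mono) auto
    also have "\<dots> = c * infnorm x" by (simp add: a_def)
    finally have h: "a * (\<Sum>b\<in>Basis. \<bar>x \<bullet> b\<bar>) \<le> c * infnorm x" .
    have "(\<Sum>b\<in>Basis. - a * \<bar>x \<bullet> b\<bar>) = - (a * (\<Sum>b\<in>Basis. \<bar>x \<bullet> b\<bar>))"
      by (simp add: sum_distrib_left sum_negf)
    with h have "- c * infnorm x \<le> (\<Sum>b\<in>Basis. - a * \<bar>x \<bullet> b\<bar>)" by linarith
    then have "exp (- c * infnorm x) \<le> exp (\<Sum>b\<in>Basis. - a * \<bar>x \<bullet> b\<bar>)" by simp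
    also have "\<dots> = (\<Prod>b\<in>Basis. exp (- a * \<bar>x \<bullet> b\<bar>))" by (simp add: exp_sum)
    finally show ?thesis by (simp add: prod_ennreal ennreal_leI)
  qed
  have "(\<integral>\<^sup>+x. ennreal (exp (- c * infnorm (x::'a))) \<partial>lborel) \<le> (\<integral>\<^sup>+x. (\<Prod>b\<in>Basis. ennreal (exp (- a * \<bar>(x::'a) \<bullet> b\<bar>))) \<partial>lborel)"
    by (intro nn_integral_mono pw)
  also have "\<dots> = (\<Prod>b\<in>(Basis::'a set). (\<integral>\<^sup>+t. ennreal (exp (- a * \<bar>t\<bar>)) \<partial>lborel))"
    by (rule nn_integral_lborel_prod[where f = "\<lambda>b t. ennreal (exp (- a * \<bar>t\<bar>))"]) auto
  also have "\<dots> < \<infinity>"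
    using int_exp_1d[OF a] by (simp add: less_top[symmetric] power_eq_top_ennreal)
  finally show ?thesis .
qed


lemma clamp_nth: "clamp u x $ i = max (min (x$i) u) (- u)"
  by (simp add: clamp_def)

lemma clamp_id: assumes "\<And>i. \<bar>x$i\<bar> \<le> u" shows "clamp u x = x"
proof -
  have "max (min (x$i) u) (- u) = x$i" for i
    using assms[of i] unfolding abs_le_iff min_def max_def by auto
  then show ?thesis by (simp add: clamp_def vec_eq_iff)
qed

lemma clamp_fix:
  fixes w z :: "real^'n::finite"
  assumes z: "\<And>i. \<bar>z$i\<bar> \<le> u - 1" and d: "infnorm (clamp u w - z) \<le> \<eta>" and e: "\<eta> < 1"
  shows "clamp u w = w" "infnorm (w - z) \<le> \<eta>"
proof -
  have "\<bar>w$i\<bar> \<le> u" for i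
  proof -
    have "\<bar>(clamp u w - z)$i\<bar> \<le> \<eta>" using d component_le_infnorm_cart order_trans by blast
    then have "\<bar>max (min (w$i) u) (- u) - z$i\<bar> \<le> \<eta>" by (simp add: clamp_nth)
    then show ?thesis using z[of i] e unfolding abs_le_iff max_def min_def by (auto split: if_splits)
  qed
  then show cw: "clamp u w = w" by (rule clamp_id)
  show "infnorm (w - z) \<le> \<eta>" using d by (simp add: cw)
qed

lemma cl_real_mono:
  fixes u u' s t :: real
  assumes "0 \<le> u" "u \<le> u'"
  shows "\<bar>max (min s u) (- u) - max (min t u) (- u)\<bar> \<le> \<bar>max (min s u') (- u') - max (min t u') (- u')\<bar>"
  using assms unfolding max_def min_def by auto

lemma clamp_mono:
  fixes a b :: "real^'n::finite"
  assumes "0 \<le> u" "u \<le> u'"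
  shows "infnorm (clamp u a - clamp u b) \<le> infnorm (clamp u' a - clamp u' b)"
proof (rule infnorm_le_cartI)
  fix i
  have "\<bar>(clamp u a - clamp u b) $ i\<bar> \<le> \<bar>(clamp u' a - clamp u' b) $ i\<bar>"
    using cl_real_mono[OF assms, of "a$i" "b$i"] by (simp add: clamp_nth)
  also have "\<dots> \<le> infnorm (clamp u' a - clamp u' b)" by (rule component_le_infnorm_cart)
  finally show "\<bar>(clamp u a - clamp u b) $ i\<bar> \<le> infnorm (clamp u' a - clamp u' b)" .
qed

lemma nn_integral_lower_Icc:
  fixes f :: "real \<Rightarrow> ennreal"
  assumes "0 \<le> A" "A \<le> B" and "\<And>u. A \<le> u \<Longrightarrow> u \<le> B \<Longrightarrow> ennreal c \<le> f u"
  shows "ennreal c * ennreal (B - A) \<le> (\<integral>\<^sup>+u\<in>{0..}. f u \<partial>lborel)"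
proof -
  have "(\<integral>\<^sup>+u. ennreal c * indicator {A..B} u \<partial>lborel) \<le> (\<integral>\<^sup>+u\<in>{0..}. f u \<partial>lborel)"
    by (intro nn_integral_mono) (use assms in \<open>auto simp: indicator_def\<close>)
  moreover have "(\<integral>\<^sup>+u. ennreal c * indicator {A..B} u \<partial>lborel) = ennreal c * ennreal (B - A)"
    using assms by (simp add: nn_integral_cmult_indicator)
  ultimately show ?thesis by simp
qed

lemma dS_extract:
  fixes \<rho> \<sigma> :: "real^'n::finite \<Rightarrow> int extended"
  assumes d: "dS \<rho> \<sigma> < ennreal (exp (- (U + 2)) * min 1 \<eta>)" and U: "U \<ge> 0" and e: "\<eta> > 0"
  shows "\<exists>lam\<in>Lambda. \<exists>u. U \<le> u \<and> u \<le> U + 1 \<and> (\<forall>x. \<rho> (clamp u x) = \<sigma> (clamp u (apply_tc lam x)))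
           \<and> (\<forall>x. infnorm (clamp u (apply_tc lam x) - clamp u x) \<le> \<eta>)"
proof -
  define t where "t = exp (- (U + 2)) * min 1 \<eta>"
  have t: "t > 0" using e by (simp add: t_def)
  note d' = d[unfolded dS_def, folded t_def]
  obtain lam where lam: "lam \<in> Lambda"
    and lt: "max (gamma lam) (\<integral>\<^sup>+ u\<in>{0..}. ennreal (exp (-u)) *
          (SUP x::real^'n. (if \<rho> (clamp u x) \<noteq> \<sigma> (clamp u (apply_tc lam x)) then 1 else 0)) \<partial>lborel) < ennreal t"
    using INF_less_iff[THEN iffD1, OF d'] by (rule bexE)
  define s where "s u = (SUP x::real^'n. ennreal (infnorm (clamp u (apply_tc lam x) - clamp u x)))" for u
  have g: "gamma lam < ennreal t" using lt by simp
  have smono: "s u \<le> s u'" if "0 \<le> u" "u \<le> u'" for u u'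
    unfolding s_def by (intro SUP_mono) (use clamp_mono[OF that] in \<open>auto intro: ennreal_leI\<close>)
  have sU: "s (U + 1) \<le> ennreal \<eta>"
  proof (rule ccontr)
    assume "\<not> s (U + 1) \<le> ennreal \<eta>"
    then have big: "ennreal \<eta> < s (U + 1)" by simp
    have "ennreal t * ennreal ((U + 2) - (U + 1)) \<le> (\<integral>\<^sup>+u\<in>{0..}. ennreal (exp (-u)) *
           min 1 (SUP x::real^'n. ennreal (infnorm (clamp u (apply_tc lam x) - clamp u x))) \<partial>lborel)"
    proof (rule nn_integral_lower_Icc)
      fix u assume u: "U + 1 \<le> u" "u \<le> U + 2"
      have "ennreal \<eta> < s u" using big smono[of "U + 1" u] u U by auto
      have m: "ennreal (min 1 \<eta>) \<le> min 1 (s u)"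
      proof (rule min.boundedI)
        show "ennreal (min 1 \<eta>) \<le> 1" by simp
        have "ennreal (min 1 \<eta>) \<le> ennreal \<eta>" by (intro ennreal_leI) auto
        then show "ennreal (min 1 \<eta>) \<le> s u" using \<open>ennreal \<eta> < s u\<close> by simp
      qed
      have "ennreal t = ennreal (exp (- (U + 2))) * ennreal (min 1 \<eta>)"
        unfolding t_def using e by (simp add: ennreal_mult)
      also have "\<dots> \<le> ennreal (exp (-u)) * min 1 (s u)"
        by (intro mult_mono m) (use u in \<open>auto intro: ennreal_leI\<close>)
      finally show "ennreal t \<le> ennreal (exp (-u)) * min 1 (SUP x::real^'n. ennreal (infnorm (clamp u (apply_tc lam x) - clamp u x)))"
        by (simp add: s_def)
    qed (use U in auto)
    also have "\<dots> \<le> gamma lam" unfolding gamma_def by (rule add_increasing) auto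
    finally show False using g by simp
  qed
  have hb: "infnorm (clamp u (apply_tc lam x) - clamp u x) \<le> \<eta>" if "0 \<le> u" "u \<le> U + 1" for u x
  proof -
    have "ennreal (infnorm (clamp u (apply_tc lam x) - clamp u x)) \<le> s u"
      unfolding s_def by (rule SUP_upper) auto
    also have "\<dots> \<le> s (U + 1)" by (rule smono) (use that in auto)
    also have "\<dots> \<le> ennreal \<eta>" by (rule sU)
    finally show ?thesis using e by (simp add: ennreal_le_iff)
  qed
  have "\<exists>u. U \<le> u \<and> u \<le> U + 1 \<and> (\<forall>x. \<rho> (clamp u x) = \<sigma> (clamp u (apply_tc lam x)))"
  proof (rule ccontr)
    assume na: "\<not> ?thesis"
    have "ennreal t * ennreal ((U + 1) - U) \<le> (\<integral>\<^sup>+ u\<in>{0..}. ennreal (exp (-u)) *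
          (SUP x::real^'n. (if \<rho> (clamp u x) \<noteq> \<sigma> (clamp u (apply_tc lam x)) then 1 else 0)) \<partial>lborel)"
    proof (rule nn_integral_lower_Icc)
      fix u assume u: "U \<le> u" "u \<le> U + 1"
      then obtain x where x: "\<rho> (clamp u x) \<noteq> \<sigma> (clamp u (apply_tc lam x))" using na by blast
      have one: "(1::ennreal) \<le> (SUP x::real^'n. (if \<rho> (clamp u x) \<noteq> \<sigma> (clamp u (apply_tc lam x)) then 1 else 0))"
        by (rule SUP_upper2[of x]) (use x in auto)
      have "exp (- (U + 2)) * min 1 \<eta> \<le> exp (- (U + 2)) * 1"
        by (intro mult_left_mono) auto
      also have "exp (- (U + 2)) * 1 \<le> exp (- u)" using u by simp
      finally have "t \<le> exp (- u)" unfolding t_def .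
      then have "ennreal t \<le> ennreal (exp (-u)) * 1" by (simp add: ennreal_leI)
      also have "\<dots> \<le> ennreal (exp (-u)) * (SUP x::real^'n. (if \<rho> (clamp u x) \<noteq> \<sigma> (clamp u (apply_tc lam x)) then 1 else 0))"
        by (intro mult_left_mono one) auto
      finally show "ennreal t \<le> ennreal (exp (-u)) * (SUP x::real^'n. (if \<rho> (clamp u x) \<noteq> \<sigma> (clamp u (apply_tc lam x)) then 1 else 0))" .
    qed (use U in auto)
    also have "\<dots> < ennreal t" using lt by simp
    finally show False by simp
  qed
  then obtain u where u: "U \<le> u" "u \<le> U + 1" "\<forall>x. \<rho> (clamp u x) = \<sigma> (clamp u (apply_tc lam x))" by blast
  show ?thesis using lam u hb[of u] U by auto
qed


lemma inf_close:
  fixes g k :: "'a \<Rightarrow> real"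
  assumes ne: "S \<noteq> {}" and bg: "bdd_below (g ` S)" and bk: "bdd_below (k ` S)"
    and cl: "\<And>x. x \<in> S \<Longrightarrow> \<bar>g x - k x\<bar> \<le> \<eta>"
  shows "\<bar>Inf (g ` S) - Inf (k ` S)\<bar> \<le> \<eta>"
proof -
  have "Inf (g ` S) - \<eta> \<le> Inf (k ` S)"
  proof (rule cInf_greatest)
    show "k ` S \<noteq> {}" using ne by auto
    fix y assume "y \<in> k ` S"
    then obtain x where x: "x \<in> S" "y = k x" by auto
    have "Inf (g ` S) \<le> g x" using x bg by (auto intro: cInf_lower)
    then show "Inf (g ` S) - \<eta> \<le> y" using cl[OF x(1)] x by auto
  qed
  moreover have "Inf (k ` S) - \<eta> \<le> Inf (g ` S)"
  proof (rule cInf_greatest)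
    show "g ` S \<noteq> {}" using ne by auto
    fix y assume "y \<in> g ` S"
    then obtain x where x: "x \<in> S" "y = g x" by auto
    have "Inf (k ` S) \<le> k x" using x bk by (auto intro: cInf_lower)
    then show "Inf (k ` S) - \<eta> \<le> y" using cl[OF x(1)] x by auto
  qed
  ultimately show ?thesis by auto
qed

lemma abs_le_vec_low:
  fixes x :: "real^'n::finite"
  assumes "\<And>i. \<bar>x$i\<bar> \<le> r" shows "(\<chi> i. - r) \<le> x"
  unfolding less_eq_vec_def
proof
  fix i
  have "- r \<le> x$i" using assms[of i] by linarith
  then show "(\<chi> i. - r) $ i \<le> x $ i" by simp
qed

lemma apply_tc_nth: "apply_tc lam x $ i = lam i (x $ i)"
  by (simp add: apply_tc_def)

lemma tc_b:
  fixes b :: "real^'n::finite"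
  assumes cl: "\<forall>x. infnorm (clamp u (apply_tc lam x) - clamp u x) \<le> \<eta>" and e: "\<eta> < 1"
    and b: "\<And>i. \<bar>b$i\<bar> \<le> u - 1"
  shows "infnorm (apply_tc lam b - b) \<le> \<eta>"
proof -
  have cb: "clamp u b = b" proof (rule clamp_id) fix i show "\<bar>b $ i\<bar> \<le> u" using b[of i] by linarith qed
  show ?thesis using clamp_fix(2)[of b u "apply_tc lam b" \<eta>] cl[rule_format, of b] cb b e by simp
qed

lemma correspondence:
  fixes \<rho> \<sigma> :: "real^'n::finite \<Rightarrow> int extended"
  assumes lam: "lam \<in> Lambda"
    and ag: "\<forall>x. \<rho> (clamp u x) = \<sigma> (clamp u (apply_tc lam x))"
    and cl: "\<forall>x. infnorm (clamp u (apply_tc lam x) - clamp u x) \<le> \<eta>" and e: "\<eta> < 1"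
    and b: "\<And>i. \<bar>b$i\<bar> \<le> u - 1"
    and b1: "\<And>x i. x \<in> Eset \<rho> b h \<Longrightarrow> \<bar>x$i\<bar> \<le> u - 1"
    and b2: "\<And>x i. x \<in> Eset \<sigma> (apply_tc lam b) h \<Longrightarrow> \<bar>x$i\<bar> \<le> u - 1"
  shows "infnorm (ybh b h \<rho> - ybh (apply_tc lam b) h \<sigma>) \<le> \<eta>"
proof -
  let ?f = "apply_tc lam"
  let ?E1 = "Eset \<rho> b h" and ?E2 = "Eset \<sigma> (?f b) h"
  have sm: "strict_mono (lam i)" and bj: "bij (lam i)" for i using lam by (auto simp: Lambda_def)
  have fb: "infnorm (?f b - b) \<le> \<eta>" by (rule tc_b[OF cl e b])
  have mono_iff: "?f x \<le> ?f y \<longleftrightarrow> x \<le> y" for x y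
    using sm by (simp add: less_eq_vec_def apply_tc_nth strict_mono_less_eq)
  have fwd: "?f x \<in> ?E2 \<and> infnorm (?f x - x) \<le> \<eta>" if x: "x \<in> ?E1" for x
  proof -
    have xb: "\<And>i. \<bar>x$i\<bar> \<le> u - 1" using b1[OF x] by blast
    have cx: "clamp u x = x" proof (rule clamp_id) fix i show "\<bar>x $ i\<bar> \<le> u" using xb[of i] by linarith qed
    have d: "infnorm (clamp u (?f x) - x) \<le> \<eta>" using cl[rule_format, of x] cx by simp
    have cfx: "clamp u (?f x) = ?f x" by (rule clamp_fix(1)[OF xb d e])
    have "\<rho> x = \<sigma> (?f x)" using ag[rule_format, of x] cx cfx by simp
    moreover have "?f x \<le> ?f b" using x mono_iff by (simp add: Eset_def)
    ultimately have "?f x \<in> ?E2" using x by (simp add: Eset_def)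
    moreover have "infnorm (?f x - x) \<le> \<eta>" by (rule clamp_fix(2)[OF xb d e])
    ultimately show ?thesis by blast
  qed
  have bwd: "z \<in> ?f ` ?E1" if z: "z \<in> ?E2" for z
  proof -
    define x where "x = (\<chi> i. inv (lam i) (z$i))"
    have fx: "?f x = z" using bj by (simp add: x_def vec_eq_iff apply_tc_nth bij_is_surj surj_f_inv_f)
    have zb: "\<And>i. \<bar>z$i\<bar> \<le> u - 1" using b2[OF z] by blast
    have cz: "clamp u z = z" proof (rule clamp_id) fix i show "\<bar>z $ i\<bar> \<le> u" using zb[of i] by linarith qed
    have "infnorm (z - clamp u x) \<le> \<eta>" using cl[rule_format, of x] fx cz by simp
    then have d: "infnorm (clamp u x - z) \<le> \<eta>" by (simp add: infnorm_sub)
    have cx: "clamp u x = x" by (rule clamp_fix(1)[OF zb d e])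
    have "\<rho> x = \<sigma> z" using ag[rule_format, of x] cx fx cz by simp
    moreover have "x \<le> b" using z mono_iff[of x b] fx by (simp add: Eset_def)
    ultimately have "x \<in> ?E1" using z by (simp add: Eset_def)
    then show ?thesis using fx by blast
  qed
  have img: "?f ` ?E1 = ?E2" using fwd bwd by blast
  show ?thesis
  proof (cases "?E1 = {}")
    case True
    then have "?E2 = {}" using img by auto
    then show ?thesis using True fb by (simp add: ybh_empty infnorm_sub)
  next
    case False
    then have ne2: "?E2 \<noteq> {}" using img by auto
    have bd1: "\<forall>x\<in>?E1. (\<chi> i. - (u - 1)) \<le> x"
    proof (intro ballI)
      fix x assume "x \<in> ?E1"
      then have "\<bar>x$i\<bar> \<le> u - 1" for i using b1 by blast
      then show "(\<chi> i. - (u - 1)) \<le> x" by (rule abs_le_vec_low)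
    qed
    have bd2: "\<forall>x\<in>?E2. (\<chi> i. - (u - 1)) \<le> x"
    proof (intro ballI)
      fix x assume "x \<in> ?E2"
      then have "\<bar>x$i\<bar> \<le> u - 1" for i using b2 by blast
      then show "(\<chi> i. - (u - 1)) \<le> x" by (rule abs_le_vec_low)
    qed
    show ?thesis
    proof (rule infnorm_le_cartI)
      fix i
      have ii: "(\<lambda>x. (?f x)$i) ` ?E1 = (\<lambda>z. z$i) ` ?E2" unfolding img[symmetric] image_image ..
      have "ybh b h \<rho> $ i = Inf ((\<lambda>x. x$i) ` ?E1)" by (rule ybh_comp[OF False bd1])
      moreover have "ybh (?f b) h \<sigma> $ i = Inf ((\<lambda>x. (?f x)$i) ` ?E1)"
        using ybh_comp[OF ne2 bd2, of i] by (simp only: ii)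
      moreover have "\<bar>Inf ((\<lambda>x. x$i) ` ?E1) - Inf ((\<lambda>x. (?f x)$i) ` ?E1)\<bar> \<le> \<eta>"
      proof (rule inf_close[OF False])
        show "bdd_below ((\<lambda>x. x$i) ` ?E1)" using bd1 by (auto simp: bdd_below_def less_eq_vec_def)
        have "bdd_below ((\<lambda>x. x$i) ` ?E2)" using bd2 by (auto simp: bdd_below_def less_eq_vec_def)
        then show "bdd_below ((\<lambda>x. (?f x)$i) ` ?E1)" by (simp only: ii)
        fix x assume "x \<in> ?E1"
        then have "infnorm (?f x - x) \<le> \<eta>" using fwd by blast
        then show "\<bar>x$i - (?f x)$i\<bar> \<le> \<eta>"
          using component_le_infnorm_cart[of "?f x - x" i] by auto
      qed
      ultimately show "\<bar>(ybh b h \<rho> - ybh (?f b) h \<sigma>) $ i\<bar> \<le> \<eta>" by simp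
    qed
  qed
qed


lemma grid_transfer:
  fixes \<sigma> :: "real^'n::finite \<Rightarrow> int extended"
  assumes cell: "\<forall>x y. (\<forall>i. a$i \<le> x$i \<and> x$i < c$i) \<longrightarrow> (\<forall>i. a$i \<le> y$i \<and> y$i < c$i) \<longrightarrow> same_cell S x y \<longrightarrow> \<sigma> x = \<sigma> y"
    and bc: "\<And>i. b$i < c$i" and ab': "\<And>i. a$i \<le> b'$i"
    and nos: "\<And>i s. s \<in> S i \<Longrightarrow> \<not> (b'$i < s \<and> s \<le> b$i)"
    and low: "\<And>x. x \<in> Eset \<sigma> b h \<Longrightarrow> a \<le> x"
    and x: "x \<in> Eset \<sigma> b h"
  shows "\<exists>x'. x' \<in> Eset \<sigma> b' h \<and> x' \<le> x"
proof -
  define x' :: "real^'n" where "x' = (\<chi> j. min (x$j) (b'$j))"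
  have xb: "x$i \<le> b$i" for i using x by (simp add: Eset_def less_eq_vec_def)
  have ax: "a$i \<le> x$i" for i using low[OF x] by (simp add: less_eq_vec_def)
  have x'x: "x'$i \<le> x$i" for i by (simp add: x'_def)
  have box1: "\<forall>i. a$i \<le> x$i \<and> x$i < c$i" using xb ax bc by (meson order_le_less_trans)
  have box2: "\<forall>i. a$i \<le> x'$i \<and> x'$i < c$i"
  proof
    fix i
    have "a$i \<le> x'$i" using ax[of i] ab'[of i] by (simp add: x'_def)
    moreover have "x'$i < c$i" using x'x[of i] box1 by (meson order_le_less_trans)
    ultimately show "a$i \<le> x'$i \<and> x'$i < c$i" by blast
  qed
  have sc: "same_cell S x x'"
    unfolding same_cell_def
  proof (intro allI ballI conjI notI)
    fix i s assume s: "s \<in> S i"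
    { assume "x$i < s \<and> s \<le> x'$i" then show False using x'x[of i] by auto }
    { assume a1: "x'$i < s \<and> s \<le> x$i"
      then have "x'$i < x$i" by auto
      then have "x'$i = b'$i" by (auto simp: x'_def min_def split: if_splits)
      then show False using a1 xb[of i] nos[OF s] by auto }
  qed
  have "\<sigma> x' = \<sigma> x" using cell box1 box2 sc by metis
  moreover have "x' \<le> b'" by (simp add: x'_def less_eq_vec_def)
  ultimately have "x' \<in> Eset \<sigma> b' h" using x by (simp add: Eset_def)
  moreover have "x' \<le> x" using x'x by (simp add: less_eq_vec_def)
  ultimately show ?thesis by blast
qed

lemma grid_ybh:
  fixes \<sigma> :: "real^'n::finite \<Rightarrow> int extended"
  assumes cell: "\<forall>x y. (\<forall>i. a$i \<le> x$i \<and> x$i < c$i) \<longrightarrow> (\<forall>i. a$i \<le> y$i \<and> y$i < c$i) \<longrightarrow> same_cell S x y \<longrightarrow> \<sigma> x = \<sigma> y"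
    and bc: "\<And>i. b$i < c$i" and b'c: "\<And>i. b'$i < c$i" and ab: "\<And>i. a$i \<le> b$i" and ab': "\<And>i. a$i \<le> b'$i"
    and nos: "\<And>i s. s \<in> S i \<Longrightarrow> \<not> (min (b$i) (b'$i) < s \<and> s \<le> max (b$i) (b'$i))"
    and low1: "\<And>x. x \<in> Eset \<sigma> b h \<Longrightarrow> a \<le> x" and low2: "\<And>x. x \<in> Eset \<sigma> b' h \<Longrightarrow> a \<le> x"
  shows "infnorm (ybh b h \<sigma> - ybh b' h \<sigma>) \<le> infnorm (b - b')"
proof -
  have nos1: "\<not> (b'$i < s \<and> s \<le> b$i)" if "s \<in> S i" for i s
    using nos[OF that] by (auto simp: min_def max_def split: if_splits)
  have nos2: "\<not> (b$i < s \<and> s \<le> b'$i)" if "s \<in> S i" for i s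
    using nos[OF that] by (auto simp: min_def max_def split: if_splits)
  have T1: "\<exists>x'. x' \<in> Eset \<sigma> b' h \<and> x' \<le> x" if "x \<in> Eset \<sigma> b h" for x
    by (rule grid_transfer[OF cell bc ab' nos1 low1 that])
  have T2: "\<exists>x'. x' \<in> Eset \<sigma> b h \<and> x' \<le> x" if "x \<in> Eset \<sigma> b' h" for x
    by (rule grid_transfer[OF cell b'c ab nos2 low2 that])
  show ?thesis
  proof (cases "Eset \<sigma> b h = {}")
    case True
    then have "Eset \<sigma> b' h = {}" using T2 by blast
    then show ?thesis using True by (simp add: ybh_empty)
  next
    case False
    then have ne2: "Eset \<sigma> b' h \<noteq> {}" using T1 by blast
    have bd1: "\<forall>x\<in>Eset \<sigma> b h. a \<le> x" using low1 by blast
    have bd2: "\<forall>x\<in>Eset \<sigma> b' h. a \<le> x" using low2 by blast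
    have bdd1: "bdd_below ((\<lambda>x. x$i) ` Eset \<sigma> b h)" for i
      using bd1 unfolding bdd_below_def less_eq_vec_def by auto
    have bdd2: "bdd_below ((\<lambda>x. x$i) ` Eset \<sigma> b' h)" for i
      using bd2 unfolding bdd_below_def less_eq_vec_def by auto
    have "ybh b h \<sigma> = ybh b' h \<sigma>"
    proof (simp add: vec_eq_iff ybh_comp[OF False bd1] ybh_comp[OF ne2 bd2], intro allI antisym)
      fix i
      show "Inf ((\<lambda>x. x$i) ` Eset \<sigma> b h) \<le> Inf ((\<lambda>x. x$i) ` Eset \<sigma> b' h)"
      proof (rule cInf_greatest)
        show "(\<lambda>x. x$i) ` Eset \<sigma> b' h \<noteq> {}" using ne2 by auto
        fix y assume "y \<in> (\<lambda>x. x$i) ` Eset \<sigma> b' h"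
        then obtain x where x: "x \<in> Eset \<sigma> b' h" "y = x$i" by auto
        obtain x' where x': "x' \<in> Eset \<sigma> b h" "x' \<le> x" using T2[OF x(1)] by blast
        have "Inf ((\<lambda>x. x$i) ` Eset \<sigma> b h) \<le> x'$i" using x'(1) bdd1 by (auto intro: cInf_lower)
        also have "\<dots> \<le> y" using x'(2) x(2) by (simp add: less_eq_vec_def)
        finally show "Inf ((\<lambda>x. x$i) ` Eset \<sigma> b h) \<le> y" .
      qed
      show "Inf ((\<lambda>x. x$i) ` Eset \<sigma> b' h) \<le> Inf ((\<lambda>x. x$i) ` Eset \<sigma> b h)"
      proof (rule cInf_greatest)
        show "(\<lambda>x. x$i) ` Eset \<sigma> b h \<noteq> {}" using False by auto
        fix y assume "y \<in> (\<lambda>x. x$i) ` Eset \<sigma> b h"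
        then obtain x where x: "x \<in> Eset \<sigma> b h" "y = x$i" by auto
        obtain x' where x': "x' \<in> Eset \<sigma> b' h" "x' \<le> x" using T1[OF x(1)] by blast
        have "Inf ((\<lambda>x. x$i) ` Eset \<sigma> b' h) \<le> x'$i" using x'(1) bdd2 by (auto intro: cInf_lower)
        also have "\<dots> \<le> y" using x'(2) x(2) by (simp add: less_eq_vec_def)
        finally show "Inf ((\<lambda>x. x$i) ` Eset \<sigma> b' h) \<le> y" .
      qed
    qed
    then show ?thesis by (simp add: infnorm_pos_le infnorm_0)
  qed
qed

definition slab :: "('n \<Rightarrow> real set) \<Rightarrow> real \<Rightarrow> real \<Rightarrow> (real^'n::finite) set" where
  "slab S \<delta> R = (\<Union>p\<in>(SIGMA i:UNIV. S i). cbox (\<chi> j. if j = fst p then snd p - \<delta> else - R) (\<chi> j. if j = fst p then snd p + \<delta> else R))"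

lemma not_slab:
  fixes b :: "real^'n::finite"
  assumes "b \<notin> slab S \<delta> R" "\<And>j. \<bar>b$j\<bar> \<le> R" "s \<in> S i"
  shows "\<delta> < \<bar>b$i - s\<bar>"
proof (rule ccontr)
  assume "\<not> \<delta> < \<bar>b$i - s\<bar>"
  have bj: "- R \<le> b$j" "b$j \<le> R" for j using assms(2)[of j] by linarith+
  from \<open>\<not> \<delta> < \<bar>b$i - s\<bar>\<close> bj have "b \<in> cbox (\<chi> j. if j = i then s - \<delta> else - R) (\<chi> j. if j = i then s + \<delta> else R)"
    by (auto simp: mem_box_cart abs_le_iff)
  moreover have "(i, s) \<in> (SIGMA i:UNIV. S i)" using assms(3) by auto
  ultimately have "b \<in> slab S \<delta> R" unfolding slab_def
    by (intro UN_I[of "(i, s)"]) (simp_all only: fst_conv snd_conv)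
  then show False using assms(1) by blast
qed

lemma slab_measure:
  fixes S :: "'n::finite \<Rightarrow> real set"
  assumes fin: "\<And>i. finite (S i)" and d: "0 \<le> \<delta>" and R: "0 \<le> R"
  shows "emeasure lborel (slab S \<delta> R) \<le> ennreal (real (\<Sum>i\<in>UNIV. card (S i)) * ((2 * \<delta>) * (2 * R + 1) ^ CARD('n)))"
proof -
  define I where "I = (SIGMA i:UNIV. S i)"
  define B where "B p = cbox (\<chi> j. if j = fst p then snd p - \<delta> else - R) (\<chi> j. if j = fst p then snd p + \<delta> else R :: real^'n)" for p
  have finI: "finite I" unfolding I_def using fin by auto
  have cI: "card I = (\<Sum>i\<in>UNIV. card (S i))" unfolding I_def using fin by (simp add: card_SigmaI)
  have Bm: "emeasure lborel (B p) \<le> ennreal ((2 * \<delta>) * (2 * R + 1) ^ CARD('n))" for p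
  proof -
    obtain i s where p: "p = (i, s)" by (cases p)
    define g where "g j = (if j = i then 2 * \<delta> else 2 * R)" for j
    have em: "emeasure lborel (B p) = ennreal (\<Prod>j\<in>UNIV. g j)"
      unfolding B_def p using d R by (subst emeasure_cbox_cart) (auto simp: g_def intro!: arg_cong[where f = ennreal] prod.cong)
    have "(\<Prod>j\<in>UNIV. g j) = g i * (\<Prod>j\<in>UNIV - {i}. g j)" by (rule prod.remove) auto
    also have "(\<Prod>j\<in>UNIV - {i}. g j) = (2 * R) ^ card (UNIV - {i})" by (simp add: g_def)
    finally have pr: "(\<Prod>j\<in>UNIV. g j) = (2 * \<delta>) * (2 * R) ^ card (UNIV - {i})" by (simp add: g_def)
    have "(2 * R) ^ card (UNIV - {i} :: 'n set) \<le> (2 * R + 1) ^ card (UNIV - {i} :: 'n set)"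
      using R by (intro power_mono) auto
    also have "\<dots> \<le> (2 * R + 1) ^ CARD('n)"
      using R by (intro power_increasing) (auto simp: card_Diff_subset)
    finally have "(2 * \<delta>) * (2 * R) ^ card (UNIV - {i} :: 'n set) \<le> (2 * \<delta>) * (2 * R + 1) ^ CARD('n)"
      using d by (intro mult_left_mono) auto
    then show ?thesis unfolding em pr by (rule ennreal_leI)
  qed
  have "emeasure lborel (slab S \<delta> R) = emeasure lborel (\<Union>p\<in>I. B p)" by (simp add: slab_def I_def B_def)
  also have "\<dots> \<le> (\<Sum>p\<in>I. emeasure lborel (B p))"
    by (rule emeasure_subadditive_finite[OF finI]) (auto simp: B_def)
  also have "\<dots> \<le> of_nat (card I) * ennreal ((2 * \<delta>) * (2 * R + 1) ^ CARD('n))"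
    by (rule sum_bounded_above) (rule Bm)
  also have "\<dots> = ennreal (real (card I)) * ennreal ((2 * \<delta>) * (2 * R + 1) ^ CARD('n))"
    by (simp only: ennreal_of_nat_eq_real_of_nat)
  also have "\<dots> = ennreal (real (card I) * ((2 * \<delta>) * (2 * R + 1) ^ CARD('n)))"
    using d R by (intro ennreal_mult[symmetric]) auto
  also have "real (card I) = real (\<Sum>i\<in>UNIV. card (S i))" by (simp only: cI)
  finally show ?thesis .
qed

lemma slab_small:
  fixes S :: "'n::finite \<Rightarrow> real set"
  assumes fin: "\<And>i. finite (S i)" and R: "0 \<le> R" and e: "e > 0"
  shows "\<exists>\<delta>>0. \<delta> \<le> 1/2 \<and> emeasure lborel (slab S \<delta> R) \<le> ennreal e"
proof -
  define Cs where "Cs = real (\<Sum>i\<in>UNIV. card (S i)) * (2 * (2 * R + 1) ^ CARD('n))"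
  have Cs: "Cs \<ge> 0" unfolding Cs_def using R by (intro mult_nonneg_nonneg) (auto intro: sum_nonneg)
  define \<delta> where "\<delta> = min (1/2) (e / (Cs + 1))"
  have d: "\<delta> > 0" using e Cs by (simp add: \<delta>_def)
  have "emeasure lborel (slab S \<delta> R) \<le> ennreal (real (\<Sum>i\<in>UNIV. card (S i)) * ((2 * \<delta>) * (2 * R + 1) ^ CARD('n)))"
    by (rule slab_measure[OF fin]) (use d R in auto)
  also have "real (\<Sum>i\<in>UNIV. card (S i)) * ((2 * \<delta>) * (2 * R + 1) ^ CARD('n)) = Cs * \<delta>"
    by (simp add: Cs_def)
  also have "Cs * \<delta> \<le> Cs * (e / (Cs + 1))" using Cs by (intro mult_left_mono) (auto simp: \<delta>_def)
  also have "\<dots> \<le> e" using Cs e by (simp add: field_simps)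
  finally have "emeasure lborel (slab S \<delta> R) \<le> ennreal e" by (simp add: ennreal_leI)
  moreover have "\<delta> \<le> 1/2" unfolding \<delta>_def by (rule min.cobounded1)
  ultimately show ?thesis using d by blast
qed


lemma ennreal_tendsto0I:
  fixes f :: "nat \<Rightarrow> ennreal"
  assumes ev: "\<And>e. e > 0 \<Longrightarrow> eventually (\<lambda>n. f n \<le> ennreal e) sequentially"
  shows "f \<longlonglongrightarrow> 0"
proof (rule order_tendstoI)
  fix l :: ennreal assume "l < 0" then show "eventually (\<lambda>n. l < f n) sequentially" by simp
next
  fix u :: ennreal assume u: "u > 0"
  obtain e where e: "e > 0" "ennreal e < u"
  proof (cases u rule: ennreal_cases)
    case (real r)
    then have "r > 0" using u by simp
    then show ?thesis using real by (intro that[of "r/2"]) (auto simp: ennreal_lessI)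
  next
    case top then show ?thesis by (intro that[of 1]) auto
  qed
  from ev[OF e(1)] show "eventually (\<lambda>n. f n < u) sequentially"
    by eventually_elim (use e(2) in auto)
qed

lemma infnorm_diff_le: "infnorm (x - y) \<le> infnorm x + infnorm (y::'a::euclidean_space)"
  using infnorm_triangle[of x "- y"] by (simp add: infnorm_neg)

lemma meas_exp_infnorm: "(\<lambda>b::'a::euclidean_space. ennreal (exp (- c * infnorm b))) \<in> borel_measurable borel"
proof -
  have "continuous_on UNIV (\<lambda>b::'a. exp (- c * infnorm b))"
    by (intro continuous_intros)
  then have "(\<lambda>b::'a. exp (- c * infnorm b)) \<in> borel_measurable borel"
    by (rule borel_measurable_continuous_onI)
  then show ?thesis by measurable
qed

lemma slab_sets: "slab S \<delta> R \<in> sets lborel" if "\<And>i. finite (S i)" for S :: "'n::finite \<Rightarrow> real set"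
proof -
  have "finite (SIGMA i:UNIV. S i)" using that by auto
  then show ?thesis unfolding slab_def by (intro sets.finite_UN) auto
qed


lemma theta_bound:
  fixes \<sigma>n \<sigma> :: "real^'n::finite \<Rightarrow> int extended"
  assumes wp: "- (real CARD('n) + 1) / real CARD('n) = - p" and p: "p > 0"
    and lam: "lam \<in> Lambda"
    and ag: "\<forall>x. \<sigma>n (clamp u x) = \<sigma> (clamp u (apply_tc lam x))"
    and cl: "\<forall>x. infnorm (clamp u (apply_tc lam x) - clamp u x) \<le> \<eta>"
    and eta: "0 < \<eta>" "\<eta> < \<delta>" "\<eta> < 1" "2 * \<eta> \<le> \<epsilon>"
    and bR: "\<And>j. \<bar>b$j\<bar> \<le> R" and nb: "b \<notin> slab S \<delta> R" and R: "R \<ge> 0"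
    and c2: "c2 = (\<chi> i. R + 1)"
    and hbig: "\<And>h. h \<le> hH \<Longrightarrow> (\<forall>x. x \<le> c2 \<longrightarrow> \<sigma>n x \<ge> Fin h \<longrightarrow> infnorm x \<le> \<epsilon> / 2 * \<bar>real_of_int h\<bar> powr p)
        \<and> (\<forall>x. x \<le> c2 \<longrightarrow> \<sigma> x \<ge> Fin h \<longrightarrow> infnorm x \<le> \<epsilon> / 2 * \<bar>real_of_int h\<bar> powr p)
        \<and> R \<le> \<epsilon> / 2 * \<bar>real_of_int h\<bar> powr p \<and> 0 < \<bar>real_of_int h\<bar>"
    and bn: "\<And>h x. hH \<le> h \<Longrightarrow> x \<le> c2 \<Longrightarrow> \<sigma>n x \<ge> Fin h \<Longrightarrow> infnorm x \<le> R1"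
    and bs: "\<And>h x. hH \<le> h \<Longrightarrow> x \<le> c2 \<Longrightarrow> \<sigma> x \<ge> Fin h \<Longrightarrow> infnorm x \<le> R1"
    and R1: "R + 1 \<le> R1" and u: "R1 + 2 \<le> u"
    and cell: "\<forall>x y. (\<forall>i. a$i \<le> x$i \<and> x$i < c3$i) \<longrightarrow> (\<forall>i. a$i \<le> y$i \<and> y$i < c3$i) \<longrightarrow> same_cell S x y \<longrightarrow> \<sigma> x = \<sigma> y"
    and a: "a = (\<chi> i. - (R1 + 1))" and c3: "c3 = (\<chi> i. R + 2)"
  shows "theta b \<sigma>n \<sigma> \<le> ennreal \<epsilon>"
  unfolding theta_def wp
proof (rule SUP_least)
  fix h :: int assume "h \<in> {h. h \<le> -1}"
  then have hm: "h \<le> -1" by simp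
  have bc2: "b \<le> c2" using bR by (simp add: c2 less_eq_vec_def abs_le_iff) (smt (verit) bR abs_le_iff)
  have nbR: "infnorm b \<le> R" using bR by (rule infnorm_le_cartI)
  have ep: "0 \<le> \<epsilon>" using eta by simp
  let ?w = "\<bar>real_of_int h\<bar> powr (- p)"
  let ?D = "infnorm (ybh b h \<sigma>n - ybh b h \<sigma>)"
  have "?w * ?D \<le> \<epsilon>"
  proof (cases "h \<le> hH")
    case True
    note hb = hbig[OF True]
    have "\<forall>x\<in>Eset \<sigma>n b h. infnorm x \<le> \<epsilon> / 2 * \<bar>real_of_int h\<bar> powr p"
      using hb bc2 by (auto simp: Eset_def intro: order.trans)
    then have y1: "infnorm (ybh b h \<sigma>n) \<le> \<epsilon> / 2 * \<bar>real_of_int h\<bar> powr p"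
      using ybh_bound[of \<sigma>n b h] nbR hb by fastforce
    have "\<forall>x\<in>Eset \<sigma> b h. infnorm x \<le> \<epsilon> / 2 * \<bar>real_of_int h\<bar> powr p"
      using hb bc2 by (auto simp: Eset_def intro: order.trans)
    then have y2: "infnorm (ybh b h \<sigma>) \<le> \<epsilon> / 2 * \<bar>real_of_int h\<bar> powr p"
      using ybh_bound[of \<sigma> b h] nbR hb by fastforce
    have "?D \<le> \<epsilon> * \<bar>real_of_int h\<bar> powr p" using infnorm_diff_le[of "ybh b h \<sigma>n" "ybh b h \<sigma>"] y1 y2 by simp
    then have "?w * ?D \<le> ?w * (\<epsilon> * \<bar>real_of_int h\<bar> powr p)" by (intro mult_left_mono) auto
    also have "\<dots> = \<epsilon>" using hb by (simp add: powr_minus field_simps)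
    finally show ?thesis .
  next
    case False
    then have hH: "hH \<le> h" by simp
    let ?f = "apply_tc lam"
    have R1u: "R1 \<le> u - 2" using u by simp
    have bb: "\<bar>b$i\<bar> \<le> u - 1" for i using bR[of i] R1 u by linarith
    have fb: "infnorm (?f b - b) \<le> \<eta>" by (rule tc_b[OF cl eta(3) bb])
    have fbi: "\<bar>?f b $ i - b $ i\<bar> \<le> \<eta>" for i using component_le_infnorm_cart[of "?f b - b" i] fb by simp
    have fbc2: "?f b \<le> c2" unfolding less_eq_vec_def c2
    proof
      fix i show "?f b $ i \<le> (\<chi> i. R + 1) $ i" using fbi[of i] bR[of i] eta by (simp add: abs_le_iff)
    qed
    have b1: "\<bar>x$i\<bar> \<le> u - 1" if "x \<in> Eset \<sigma>n b h" for x i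
    proof -
      have "infnorm x \<le> R1" using that bc2 by (intro bn[OF hH]) (auto simp: Eset_def intro: order.trans)
      then show ?thesis using component_le_infnorm_cart[of x i] R1u by linarith
    qed
    have b2: "\<bar>x$i\<bar> \<le> u - 1" if "x \<in> Eset \<sigma> (?f b) h" for x i
    proof -
      have "infnorm x \<le> R1" using that fbc2 by (intro bs[OF hH]) (auto simp: Eset_def intro: order.trans)
      then show ?thesis using component_le_infnorm_cart[of x i] R1u by linarith
    qed
    have b3: "infnorm x \<le> R1" if "x \<in> Eset \<sigma> b h" for x
      using that bc2 by (intro bs[OF hH]) (auto simp: Eset_def intro: order.trans)
    have corr: "infnorm (ybh b h \<sigma>n - ybh (?f b) h \<sigma>) \<le> \<eta>"
      by (rule correspondence[OF lam ag cl eta(3) bb b1 b2])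
    have lowv: "a \<le> x" if "infnorm x \<le> R1" for x
    proof -
      have "\<bar>x$i\<bar> \<le> R1 + 1" for i using component_le_infnorm_cart[of x i] that by linarith
      then show ?thesis unfolding a by (rule abs_le_vec_low)
    qed
    have grid: "infnorm (ybh b h \<sigma> - ybh (?f b) h \<sigma>) \<le> infnorm (b - ?f b)"
    proof (rule grid_ybh[OF cell])
      show "b $ i < c3 $ i" for i using bR[of i] by (simp add: c3 abs_le_iff)
      show "?f b $ i < c3 $ i" for i using bR[of i] fbi[of i] eta by (simp add: c3 abs_le_iff)
      show "a $ i \<le> b $ i" for i using bR[of i] R1 by (simp add: a abs_le_iff)
      show "a $ i \<le> ?f b $ i" for i using bR[of i] fbi[of i] eta R1 by (simp add: a abs_le_iff)
      show "\<not> (min (b $ i) (?f b $ i) < s \<and> s \<le> max (b $ i) (?f b $ i))" if "s \<in> S i" for i s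
      proof
        assume "min (b $ i) (?f b $ i) < s \<and> s \<le> max (b $ i) (?f b $ i)"
        then have "\<bar>b$i - s\<bar> \<le> \<eta>" using fbi[of i] by (auto simp: min_def max_def abs_le_iff split: if_splits)
        moreover have "\<delta> < \<bar>b$i - s\<bar>" by (rule not_slab[OF nb bR that])
        ultimately show False using eta by linarith
      qed
      show "a \<le> x" if "x \<in> Eset \<sigma> b h" for x using b3[OF that] by (rule lowv)
      show "a \<le> x" if "x \<in> Eset \<sigma> (?f b) h" for x
      proof -
        have "infnorm x \<le> R1" using that fbc2 by (intro bs[OF hH]) (auto simp: Eset_def intro: order.trans)
        then show ?thesis by (rule lowv)
      qed
    qed
    have "?D \<le> infnorm (ybh b h \<sigma>n - ybh (?f b) h \<sigma>) + infnorm (ybh (?f b) h \<sigma> - ybh b h \<sigma>)"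
      using infnorm_triangle[of "ybh b h \<sigma>n - ybh (?f b) h \<sigma>" "ybh (?f b) h \<sigma> - ybh b h \<sigma>"] by simp
    also have "\<dots> \<le> \<eta> + \<eta>" using corr grid fb by (simp add: infnorm_sub)
    finally have Dle: "?D \<le> \<epsilon>" using eta by linarith
    have "1 \<le> \<bar>real_of_int h\<bar>" using hm by simp
    then have "1 \<le> \<bar>real_of_int h\<bar> powr p" using p by (intro ge_one_powr_ge_zero) auto
    then have w1: "?w \<le> 1" by (simp add: powr_minus inverse_le_1_iff)
    have "?w * ?D \<le> 1 * \<epsilon>" using w1 Dle by (intro mult_mono) (auto simp: infnorm_pos_le)
    then show ?thesis by simp
  qed
  then show "ennreal (?w * ?D) \<le> ennreal \<epsilon>" by (rule ennreal_leI)
qed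


lemma backward:
  fixes \<sigma>s :: "nat \<Rightarrow> real^'n::finite \<Rightarrow> int extended" and \<sigma> :: "real^'n \<Rightarrow> int extended"
  assumes pd: "p = (real CARD('n) + 1) / real CARD('n)" and qd: "q = real CARD('n) / (real CARD('n) + 1)"
    and s: "\<sigma> \<in> Sigma_set"
    and dS: "(\<lambda>n. dS (\<sigma>s n) \<sigma>) \<longlonglongrightarrow> 0"
    and ub: "\<And>b. UBf p \<sigma>s b"
  shows "(\<lambda>n. Theta (\<sigma>s n) \<sigma>) \<longlonglongrightarrow> 0"
proof (rule ennreal_tendsto0I)
  fix e :: real assume e: "e > 0"
  define e0 where "e0 = e / 3"
  have e0: "e0 > 0" using e by (simp add: e0_def)
  have p: "p > 0" by (simp add: pd)
  have q: "q > 0" by (simp add: qd)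
  have pq: "p * q = 1" by (simp add: pd qd)
  have wp: "- (real CARD('n) + 1) / real CARD('n) = - p" unfolding pd by (rule minus_divide_left[symmetric])
  have ubs: "UBf p (\<lambda>_. \<sigma>) b" for b by (rule sigma_UB[OF s p q pq qd])
  have fin: "(\<integral>\<^sup>+x. ennreal (exp (- (1/2) * infnorm (x::real^'n))) \<partial>lborel) < \<infinity>"
    by (rule int_exp_infnorm) simp
  obtain Cr where Cr: "Cr \<ge> 0" "(\<integral>\<^sup>+x. ennreal (exp (- (1/2) * infnorm (x::real^'n))) \<partial>lborel) = ennreal Cr"
    using fin by (cases "(\<integral>\<^sup>+x. ennreal (exp (- (1/2) * infnorm (x::real^'n))) \<partial>lborel)" rule: ennreal_cases) auto
  define R where "R = max 1 (- 2 * ln (e0 / (Cr + 1)))"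
  have R: "R \<ge> 1" by (simp add: R_def)
  have eR: "exp (- R / 2) * Cr \<le> e0"
  proof -
    have "- R / 2 \<le> ln (e0 / (Cr + 1))" by (simp add: R_def)
    then have "exp (- R / 2) \<le> exp (ln (e0 / (Cr + 1)))" by simp
    also have "exp (ln (e0 / (Cr + 1))) = e0 / (Cr + 1)" using e0 Cr by (intro exp_ln) simp
    finally have "exp (- R / 2) \<le> e0 / (Cr + 1)" .
    then have "exp (- R / 2) * Cr \<le> e0 / (Cr + 1) * Cr" using Cr by (intro mult_right_mono) auto
    also have "\<dots> \<le> e0" using Cr e0 by (simp add: field_simps)
    finally show ?thesis .
  qed
  define \<epsilon> where "\<epsilon> = min 1 (e0 / (Cr + 1))"
  have ep: "\<epsilon> > 0" using e0 Cr by (simp add: \<epsilon>_def)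
  have epC: "\<epsilon> * Cr \<le> e0"
  proof -
    have "\<epsilon> * Cr \<le> e0 / (Cr + 1) * Cr" using Cr by (intro mult_right_mono) (auto simp: \<epsilon>_def)
    also have "\<dots> \<le> e0" using Cr e0 by (simp add: field_simps)
    finally show ?thesis .
  qed
  define c2 :: "real^'n" where "c2 = (\<chi> i. R + 1)"
  have half_ep: "\<epsilon> / 2 > 0" using ep by simp
  have ev1: "eventually (\<lambda>h::int. \<forall>n x. x \<le> c2 \<longrightarrow> \<sigma>s n x \<ge> Fin h \<longrightarrow> infnorm x \<le> \<epsilon> / 2 * \<bar>real_of_int h\<bar> powr p) at_bot"
    using ub[of c2, unfolded UBf_def, rule_format, OF half_ep] .
  have ev2: "eventually (\<lambda>h::int. \<forall>(n::nat) x. x \<le> c2 \<longrightarrow> \<sigma> x \<ge> Fin h \<longrightarrow> infnorm x \<le> \<epsilon> / 2 * \<bar>real_of_int h\<bar> powr p) at_bot"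
    using ubs[of c2, unfolded UBf_def, rule_format, OF half_ep] .
  have ev3: "eventually (\<lambda>h::int. R \<le> \<epsilon> / 2 * \<bar>real_of_int h\<bar> powr p \<and> 0 < \<bar>real_of_int h\<bar>) at_bot"
    using ep p by (intro ev_abs_int eventually_conj ev_pow eventually_gt_at_top) auto
  have ev4: "eventually (\<lambda>h::int. h \<le> -1) at_bot" by simp
  have "eventually (\<lambda>h::int. (\<forall>n x. x \<le> c2 \<longrightarrow> \<sigma>s n x \<ge> Fin h \<longrightarrow> infnorm x \<le> \<epsilon> / 2 * \<bar>real_of_int h\<bar> powr p)
      \<and> (\<forall>x. x \<le> c2 \<longrightarrow> \<sigma> x \<ge> Fin h \<longrightarrow> infnorm x \<le> \<epsilon> / 2 * \<bar>real_of_int h\<bar> powr p)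
      \<and> R \<le> \<epsilon> / 2 * \<bar>real_of_int h\<bar> powr p \<and> 0 < \<bar>real_of_int h\<bar> \<and> h \<le> -1) at_bot"
    using ev1 ev2 ev3 ev4 by eventually_elim blast
  then obtain hH where hH: "\<And>h. h \<le> hH \<Longrightarrow> (\<forall>n x. x \<le> c2 \<longrightarrow> \<sigma>s n x \<ge> Fin h \<longrightarrow> infnorm x \<le> \<epsilon> / 2 * \<bar>real_of_int h\<bar> powr p)
      \<and> (\<forall>x. x \<le> c2 \<longrightarrow> \<sigma> x \<ge> Fin h \<longrightarrow> infnorm x \<le> \<epsilon> / 2 * \<bar>real_of_int h\<bar> powr p)
      \<and> R \<le> \<epsilon> / 2 * \<bar>real_of_int h\<bar> powr p \<and> 0 < \<bar>real_of_int h\<bar> \<and> h \<le> -1"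
    unfolding eventually_at_bot_linorder by blast
  define R1 where "R1 = max (R + 1) (\<epsilon> / 2 * \<bar>real_of_int hH\<bar> powr p)"
  have R1: "R + 1 \<le> R1" by (simp add: R1_def)
  have bn: "infnorm x \<le> R1" if "hH \<le> h" "x \<le> c2" "\<sigma>s n x \<ge> Fin h" for n h x
  proof -
    have "Fin hH \<le> \<sigma>s n x" using that by (meson less_eq_extended.simps(1) order_trans)
    then have "infnorm x \<le> \<epsilon> / 2 * \<bar>real_of_int hH\<bar> powr p" using hH[of hH] that(2) by blast
    then show ?thesis by (simp add: R1_def)
  qed
  have bs: "infnorm x \<le> R1" if "hH \<le> h" "x \<le> c2" "\<sigma> x \<ge> Fin h" for h x
  proof -
    have "Fin hH \<le> \<sigma> x" using that by (meson less_eq_extended.simps(1) order_trans)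
    then have "infnorm x \<le> \<epsilon> / 2 * \<bar>real_of_int hH\<bar> powr p" using hH[of hH] that(2) by blast
    then show ?thesis by (simp add: R1_def)
  qed
  define a :: "real^'n" where "a = (\<chi> i. - (R1 + 1))"
  define c3 :: "real^'n" where "c3 = (\<chi> i. R + 2)"
  have inD: "in_D \<sigma>" using s by (simp add: Sigma_set_def)
  have ac: "a$i < c3$i" for i using R R1 by (simp add: a_def c3_def)
  have "\<exists>S. (\<forall>i. finite (S i) \<and> a$i \<in> S i \<and> c3$i \<in> S i \<and> S i \<subseteq> {a$i..c3$i}) \<and>
         (\<forall>x y. (\<forall>i. a$i \<le> x$i \<and> x$i < c3$i) \<longrightarrow> (\<forall>i. a$i \<le> y$i \<and> y$i < c3$i) \<longrightarrow>
                same_cell S x y \<longrightarrow> \<sigma> x = \<sigma> y)"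
    using inD[unfolded in_D_def, rule_format, OF ac] .
  then obtain S where S1': "\<forall>i. finite (S i) \<and> a$i \<in> S i \<and> c3$i \<in> S i \<and> S i \<subseteq> {a$i..c3$i}"
    and cell: "\<forall>x y. (\<forall>i. a$i \<le> x$i \<and> x$i < c3$i) \<longrightarrow> (\<forall>i. a$i \<le> y$i \<and> y$i < c3$i) \<longrightarrow> same_cell S x y \<longrightarrow> \<sigma> x = \<sigma> y"
    by (elim exE conjE)
  have S1: "finite (S i)" for i using S1' by blast
  have R0: "0 \<le> R" using R by simp
  obtain \<delta> where d: "\<delta> > 0" "\<delta> \<le> 1/2" and dm: "emeasure lborel (slab S \<delta> R) \<le> ennreal e0"
    using slab_small[of S, OF S1 R0 e0] by (elim exE conjE)
  define \<eta> where "\<eta> = min (\<delta> / 2) (\<epsilon> / 2)"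
  have eta: "0 < \<eta>" "\<eta> < \<delta>" "\<eta> < 1" "2 * \<eta> \<le> \<epsilon>" using d ep by (auto simp: \<eta>_def)
  define U where "U = R1 + 2"
  have U: "U \<ge> 0" using R R1 by (simp add: U_def)
  define t where "t = exp (- (U + 2)) * min 1 \<eta>"
  have t: "t > 0" using eta by (simp add: t_def)
  have "eventually (\<lambda>n. dS (\<sigma>s n) \<sigma> < ennreal t) sequentially"
    using dS t by (intro order_tendstoD(2)) auto
  then show "eventually (\<lambda>n. Theta (\<sigma>s n) \<sigma> \<le> ennreal e) sequentially"
  proof eventually_elim
    case (elim n)
    obtain lam u where lam: "lam \<in> Lambda" and u: "U \<le> u" "u \<le> U + 1"
      and ag: "\<forall>x. \<sigma>s n (clamp u x) = \<sigma> (clamp u (apply_tc lam x))"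
      and cl: "\<forall>x. infnorm (clamp u (apply_tc lam x) - clamp u x) \<le> \<eta>"
      using dS_extract[OF elim[unfolded t_def] U eta(1)] by blast
    define g1 where "g1 b = ennreal (exp (- (1/2) * infnorm b))" for b :: "real^'n"
    define G where "G b = ennreal (exp (- R / 2)) * g1 b + indicator (slab S \<delta> R) b + ennreal \<epsilon> * g1 b" for b
    have pw: "ennreal (exp (- infnorm b)) * min 1 (theta b (\<sigma>s n) \<sigma>) \<le> G b" for b
    proof (cases "\<forall>j. \<bar>b$j\<bar> \<le> R")
      case False
      then obtain j where "\<bar>b$j\<bar> > R" by (auto simp: not_le)
      then have bR: "R \<le> infnorm b" using component_le_infnorm_cart[of b j] by linarith
      have "exp (- infnorm b) = exp (- (1/2) * infnorm b) * exp (- (1/2) * infnorm b)"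
        by (simp add: exp_add[symmetric])
      also have "\<dots> \<le> exp (- R / 2) * exp (- (1/2) * infnorm b)"
        using bR by (intro mult_right_mono) auto
      finally have "ennreal (exp (- infnorm b)) \<le> ennreal (exp (- R / 2)) * g1 b"
        by (simp add: g1_def ennreal_mult[symmetric] ennreal_leI)
      moreover have "ennreal (exp (- infnorm b)) * min 1 (theta b (\<sigma>s n) \<sigma>) \<le> ennreal (exp (- infnorm b))"
        using mult_left_mono[of "min 1 (theta b (\<sigma>s n) \<sigma>)" 1 "ennreal (exp (- infnorm b))"] by simp
      moreover have "ennreal (exp (- R / 2)) * g1 b \<le> G b" unfolding G_def
        by (intro add_increasing2[OF zero_le] order_refl)
      ultimately show ?thesis by (meson order_trans)
    next
      case True
      show ?thesis
      proof (cases "b \<in> slab S \<delta> R")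
        case True
        have "ennreal (exp (- infnorm b)) * min 1 (theta b (\<sigma>s n) \<sigma>) \<le> 1 * 1"
          by (intro mult_mono) (auto simp: infnorm_pos_le)
        also have "\<dots> = indicator (slab S \<delta> R) b" using True by simp
        also have "indicator (slab S \<delta> R) b \<le> G b" unfolding G_def
          by (intro add_increasing2[OF zero_le] add_increasing[OF zero_le] order_refl)
        finally show ?thesis .
      next
        case False
        have th: "theta b (\<sigma>s n) \<sigma> \<le> ennreal \<epsilon>"
        proof (rule theta_bound[OF wp p lam ag cl eta])
          show "\<bar>b$j\<bar> \<le> R" for j using \<open>\<forall>j. \<bar>b$j\<bar> \<le> R\<close> by blast
          show "b \<notin> slab S \<delta> R" by fact
          show "R \<ge> 0" using R by simp
          show "c2 = (\<chi> i. R + 1)" by (simp add: c2_def)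
          show "\<And>h. h \<le> hH \<Longrightarrow> (\<forall>x. x \<le> c2 \<longrightarrow> \<sigma>s n x \<ge> Fin h \<longrightarrow> infnorm x \<le> \<epsilon> / 2 * \<bar>real_of_int h\<bar> powr p)
            \<and> (\<forall>x. x \<le> c2 \<longrightarrow> \<sigma> x \<ge> Fin h \<longrightarrow> infnorm x \<le> \<epsilon> / 2 * \<bar>real_of_int h\<bar> powr p)
            \<and> R \<le> \<epsilon> / 2 * \<bar>real_of_int h\<bar> powr p \<and> 0 < \<bar>real_of_int h\<bar>" using hH by blast
          show "\<And>h x. hH \<le> h \<Longrightarrow> x \<le> c2 \<Longrightarrow> \<sigma>s n x \<ge> Fin h \<Longrightarrow> infnorm x \<le> R1" by (rule bn)
          show "\<And>h x. hH \<le> h \<Longrightarrow> x \<le> c2 \<Longrightarrow> \<sigma> x \<ge> Fin h \<Longrightarrow> infnorm x \<le> R1" by (rule bs)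
          show "R + 1 \<le> R1" by (rule R1)
          show "R1 + 2 \<le> u" using u by (simp add: U_def)
          show "a = (\<chi> i. - (R1 + 1))" by (simp add: a_def)
          show "c3 = (\<chi> i. R + 2)" by (simp add: c3_def)
        qed (rule cell)
        have "ennreal (exp (- infnorm b)) * min 1 (theta b (\<sigma>s n) \<sigma>) \<le> g1 b * ennreal \<epsilon>"
        proof (intro mult_mono)
          show "ennreal (exp (- infnorm b)) \<le> g1 b" unfolding g1_def by (intro ennreal_leI) (simp add: infnorm_pos_le)
          show "min 1 (theta b (\<sigma>s n) \<sigma>) \<le> ennreal \<epsilon>" using th by (simp add: min.coboundedI2)
        qed auto
        then show ?thesis unfolding G_def by (simp add: mult.commute add_increasing)
      qed
    qed
    have mg1: "g1 \<in> borel_measurable lborel" unfolding g1_def using meas_exp_infnorm[of "1/2"] by simp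
    have ms: "slab S \<delta> R \<in> sets lborel" by (rule slab_sets[OF S1])
    have "Theta (\<sigma>s n) \<sigma> \<le> (\<integral>\<^sup>+b. G b \<partial>lborel)"
      unfolding Theta_def by (intro nn_integral_mono pw)
    also have "(\<integral>\<^sup>+b. G b \<partial>lborel) = ennreal (exp (- R / 2)) * (\<integral>\<^sup>+b. g1 b \<partial>lborel) + emeasure lborel (slab S \<delta> R) + ennreal \<epsilon> * (\<integral>\<^sup>+b. g1 b \<partial>lborel)"
    proof -
      have m1: "(\<lambda>b. ennreal (exp (- R / 2)) * g1 b) \<in> borel_measurable lborel" using mg1 by measurable
      have m2: "(\<lambda>b. ennreal \<epsilon> * g1 b) \<in> borel_measurable lborel" using mg1 by measurable
      have m3: "indicator (slab S \<delta> R) \<in> borel_measurable lborel" by (rule borel_measurable_indicator[OF ms])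
      have m4: "(\<lambda>b. ennreal (exp (- R / 2)) * g1 b + indicator (slab S \<delta> R) b) \<in> borel_measurable lborel"
        using m1 m3 by measurable
      have "(\<integral>\<^sup>+b. G b \<partial>lborel) = (\<integral>\<^sup>+b. (ennreal (exp (- R / 2)) * g1 b + indicator (slab S \<delta> R) b) \<partial>lborel)
           + (\<integral>\<^sup>+b. ennreal \<epsilon> * g1 b \<partial>lborel)"
        unfolding G_def by (rule nn_integral_add[OF m4 m2])
      also have "(\<integral>\<^sup>+b. (ennreal (exp (- R / 2)) * g1 b + indicator (slab S \<delta> R) b) \<partial>lborel)
           = (\<integral>\<^sup>+b. ennreal (exp (- R / 2)) * g1 b \<partial>lborel) + (\<integral>\<^sup>+b. indicator (slab S \<delta> R) b \<partial>lborel)"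
        by (rule nn_integral_add[OF m1 m3])
      also have "(\<integral>\<^sup>+b. ennreal (exp (- R / 2)) * g1 b \<partial>lborel) = ennreal (exp (- R / 2)) * (\<integral>\<^sup>+b. g1 b \<partial>lborel)"
        by (rule nn_integral_cmult[OF mg1])
      also have "(\<integral>\<^sup>+b. ennreal \<epsilon> * g1 b \<partial>lborel) = ennreal \<epsilon> * (\<integral>\<^sup>+b. g1 b \<partial>lborel)"
        by (rule nn_integral_cmult[OF mg1])
      also have "(\<integral>\<^sup>+b. indicator (slab S \<delta> R) b \<partial>lborel) = emeasure lborel (slab S \<delta> R)"
        by (rule nn_integral_indicator[OF ms])
      finally show ?thesis .
    qed
    also have "(\<integral>\<^sup>+b. g1 b \<partial>lborel) = ennreal Cr" using Cr(2) by (simp add: g1_def)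
    also have "ennreal (exp (- R / 2)) * ennreal Cr + emeasure lborel (slab S \<delta> R) + ennreal \<epsilon> * ennreal Cr
        \<le> ennreal e0 + ennreal e0 + ennreal e0"
    proof (intro add_mono)
      show "ennreal (exp (- R / 2)) * ennreal Cr \<le> ennreal e0"
        using eR Cr by (simp add: ennreal_mult[symmetric] ennreal_leI)
      show "ennreal \<epsilon> * ennreal Cr \<le> ennreal e0"
        using epC Cr ep by (simp add: ennreal_mult[symmetric] ennreal_leI)
    qed (rule dm)
    also have "\<dots> = ennreal e" using e0 by (simp add: e0_def ennreal_plus[symmetric])
    finally show ?case .
  qed
qed


theorem lemma10p2:
  fixes \<sigma>s :: "nat \<Rightarrow> (real^'n::finite \<Rightarrow> int extended)" and \<sigma> :: "real^'n \<Rightarrow> int extended"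
  assumes "CARD('n) \<ge> 2"
    and "\<And>n. \<sigma>s n \<in> Sigma_set" and "\<sigma> \<in> Sigma_set"
    and "(\<lambda>n. dS (\<sigma>s n) \<sigma>) \<longlonglongrightarrow> 0"
  shows "((\<lambda>n. dSigma (\<sigma>s n) \<sigma>) \<longlonglongrightarrow> 0 \<longleftrightarrow>
           (\<forall>b::real^'n. ((\<lambda>h::int. SUP n. ereal (\<bar>real_of_int h\<bar> powr (- (real CARD('n) + 1) / real CARD('n))
                                      * infnorm (ybh b h (\<sigma>s n)))) \<longlongrightarrow> 0) at_bot))
       \<and> ((\<forall>b::real^'n. ((\<lambda>h::int. SUP n. ereal (\<bar>real_of_int h\<bar> powr (- (real CARD('n) + 1) / real CARD('n))
                                      * infnorm (ybh b h (\<sigma>s n)))) \<longlongrightarrow> 0) at_bot)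
           \<longleftrightarrow>
           (\<forall>b::real^'n. ((\<lambda>M::real. SUP n. SUP y\<in>{y. y \<le> b \<and> infnorm y \<ge> M}.
                 ereal (infnorm y powr (- real CARD('n) / (real CARD('n) + 1))) * zs_ereal (\<sigma>s n y))
              \<longlongrightarrow> MInfty) at_top))"
proof -
  note sn = assms(2) and s = assms(3) and dS = assms(4)
  define p where "p = (real CARD('n) + 1) / real CARD('n)"
  define q where "q = real CARD('n) / (real CARD('n) + 1)"
  have p: "p > 0" by (simp add: p_def)
  have q: "q > 0" by (simp add: q_def)
  have pq: "p * q = 1" by (simp add: p_def q_def)
  have wp: "- (real CARD('n) + 1) / real CARD('n) = - p" unfolding p_def by (rule minus_divide_left[symmetric])
  have wq: "- real CARD('n) / (real CARD('n) + 1) = - q" unfolding q_def by (rule minus_divide_left[symmetric])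
  have ubn: "UBf p (\<lambda>_. \<sigma>s n) b" for n b by (rule sigma_UB[OF sn p q pq q_def])
  have ubs: "UBf p (\<lambda>_. \<sigma>) b" for b by (rule sigma_UB[OF s p q pq q_def])
  have bd: "\<exists>m. \<forall>x\<in>Eset (\<sigma>s n) b h. m \<le> x" for n b h
  proof -
    obtain r where "\<forall>x\<in>Eset (\<sigma>s n) b h. infnorm x \<le> r" using UB_single_bdd[OF ubn[of n b]] by blast
    then show ?thesis using bdd_of_norm by blast
  qed
  have AU: "((\<lambda>h::int. SUP n. ereal (\<bar>real_of_int h\<bar> powr (- (real CARD('n) + 1) / real CARD('n))
                                      * infnorm (ybh b h (\<sigma>s n)))) \<longlongrightarrow> 0) at_bot \<longleftrightarrow> UBf p \<sigma>s b" for b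
  proof -
    have "((\<lambda>h::int. SUP n. ereal (\<bar>real_of_int h\<bar> powr (- (real CARD('n) + 1) / real CARD('n))
                                      * infnorm (ybh b h (\<sigma>s n)))) \<longlongrightarrow> 0) at_bot \<longleftrightarrow>
          (\<forall>\<epsilon>>0. eventually (\<lambda>h::int. \<forall>n. \<bar>real_of_int h\<bar> powr (- p) * infnorm (ybh b h (\<sigma>s n)) \<le> \<epsilon>) at_bot)"
      unfolding wp by (rule sup_tendsto0_iff) (simp add: infnorm_pos_le)
    also have "\<dots> \<longleftrightarrow> UBf p \<sigma>s b"
      using A_imp_UB[where F = \<sigma>s and b = b, OF p bd] UB_imp_A[where F = \<sigma>s and b = b, OF p] by blast
    finally show ?thesis .
  qed
  have BU: "((\<lambda>M::real. SUP n. SUP y\<in>{y. y \<le> b \<and> infnorm y \<ge> M}.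
                 ereal (infnorm y powr (- real CARD('n) / (real CARD('n) + 1))) * zs_ereal (\<sigma>s n y))
              \<longlongrightarrow> MInfty) at_top \<longleftrightarrow> UBf p \<sigma>s b" for b
    unfolding wq using B_imp_UB[OF p q pq] UB_imp_B[OF p q pq] by blast
  have fwd: "UBf p \<sigma>s b" if dSig: "(\<lambda>n. dSigma (\<sigma>s n) \<sigma>) \<longlonglongrightarrow> 0" for b
  proof (rule Theta_imp_UB[where \<sigma>s = \<sigma>s and \<sigma> = \<sigma> and b = b, OF p_def bd ubn ubs])
    show "(\<lambda>n. Theta (\<sigma>s n) \<sigma>) \<longlonglongrightarrow> 0"
    proof (rule tendsto_sandwich[of "\<lambda>_. 0" _ _ "\<lambda>n. dSigma (\<sigma>s n) \<sigma>"])
      show "eventually (\<lambda>n. (0::ennreal) \<le> Theta (\<sigma>s n) \<sigma>) sequentially" by simp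
      show "eventually (\<lambda>n. Theta (\<sigma>s n) \<sigma> \<le> dSigma (\<sigma>s n) \<sigma>) sequentially"
        by (simp add: dSigma_def)
    qed (use dSig in auto)
  qed
  have bwd: "(\<lambda>n. dSigma (\<sigma>s n) \<sigma>) \<longlonglongrightarrow> 0" if "\<And>b. UBf p \<sigma>s b"
  proof -
    have "(\<lambda>n. Theta (\<sigma>s n) \<sigma>) \<longlonglongrightarrow> 0" by (rule backward[OF p_def q_def s dS that])
    then have "(\<lambda>n. Theta (\<sigma>s n) \<sigma> + dS (\<sigma>s n) \<sigma>) \<longlonglongrightarrow> 0 + 0" using dS by (rule tendsto_add)
    then show ?thesis by (simp add: dSigma_def)
  qed
  show ?thesis unfolding AU BU using fwd bwd by blast
qed

end
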